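(* Let $a\in\mathbb{R}$, $T>0$, and let $\mathcal{G}_{\mathrm{adv}}$ and $\mu$ be as in the context. There exists $C>0$ such that for any $\epsilon\in(0,\tfrac12]$ there exists a (ReLU) FNO $\mathcal{N}^{\mathrm{FNO}}_\epsilon$ with grid size $N\le C\epsilon^{-1}$ such that \[ \mathbb{E}_{\bar u\sim\mu}\big[\|\mathcal{G}_{\mathrm{adv}}(\bar u)-\mathcal{N}^{\mathrm{FNO}}_\epsilon(\bar u)\|_{L^1(\mathbb{T})}\big]\le\epsilon, \] with Fourier cut-off $k_{\max}=1$, lifting dimension $d_v\le C$, $\mathrm{depth}(\mathcal{N}^{\mathrm{FNO}}_\epsilon)\le C\log(\epsilon^{-1})^2$ and $\mathrm{size}(\mathcal{N}^{\mathrm{FNO}}_\epsilon)\le C\log(\epsilon^{-1})^2$.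
   Context: $\mathbb{T}=\mathbb{R}/2\pi\mathbb{Z}$. Fix $0<\underline h\le\overline h$, $0<\underline w\le\overline w<2\pi$; $\mu$ is the law of $\bar u(x)=h\,1_{[-w/2,w/2]}(x-\xi)$ (periodized) with independent $h\sim\mathrm{Unif}[\underline h,\overline h]$, $w\sim\mathrm{Unif}[\underline w,\overline w]$, $\xi\sim\mathrm{Unif}[0,2\pi]$; $\mathcal{G}_{\mathrm{adv}}(\bar u)(x)=\bar u(x-aT)$. FNO with grid size $N$: let $x_j=2\pi j/N$, $j=1,\dots,N$, and for a (vector-valued) function $v$ on $\mathbb{T}$ let $\mathcal{F}_Nv(k)=\frac1N\sum_{j=1}^Nv(x_j)e^{-ikx_j}$. An FNO with lifting dimension $d_v$, Fourier cut-off $k_{\max}$, depth $L$ and ReLU activation $\sigma$ is $\mathcal{N}=Q\circ\mathcal{L}_L\circ\dots\circ\mathcal{L}_1\circ R$, where $(R\bar u)(x)=R(\bar u(x),x)$ with $R$ a shallow ReLU network into $\mathbb{R}^{d_v}$; $(\mathcal{L}_\ell v)(x)=\sigma\big(W_\ell v(x)+b_\ell(x)+(K_\ell v)(x)\big)$ with $W_\ell\in\mathbb{R}^{d_v\times d_v}$, $(K_\ell v)(x)=\sum_{|k|\le k_{\max}}P_\ell(k)\mathcal{F}_Nv(k)e^{ikx}$, $P_\ell(k)\in\mathbb{C}^{d_v\times d_v}$, and real bias $b_\ell(x)=\sum_{|k|\le k_{\max}}\hat b_\ell(k)e^{ikx}$; $Q$ is a linear map applied pointwise. Output functions are defined for all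 $x\in\mathbb{T}$. The depth is $L$ and the size is the total number of tunable parameters. *)

theory Defs
  imports "HOL-Analysis.Analysis" "HOL-Probability.Probability"
begin

text \<open>Functions on the torus are represented as (2pi-periodic) functions real => real.\<close>

definition relu :: "real \<Rightarrow> real" where
  "relu t = max 0 t"

definition tmod :: "real \<Rightarrow> real" where
  "tmod x = x - 2 * pi * of_int \<lfloor>x / (2 * pi)\<rfloor>"

definition ubar :: "real \<Rightarrow> real \<Rightarrow> real \<Rightarrow> real \<Rightarrow> real" where
  "ubar h w \<xi> x = (if \<exists>k::int. \<bar>x - \<xi> - 2 * pi * of_int k\<bar> \<le> w / 2 then h else 0)"

definition G_adv :: "real \<Rightarrow> real \<Rightarrow> (real \<Rightarrow> real) \<Rightarrow> (real \<Rightarrow> real)" where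
  "G_adv a T u = (\<lambda>x. u (x - a * T))"

definition unif_real :: "real \<Rightarrow> real \<Rightarrow> real measure" where
  "unif_real lo hi = (if lo < hi then uniform_measure lborel {lo..hi} else return borel lo)"

definition expect_mu ::
  "real \<Rightarrow> real \<Rightarrow> real \<Rightarrow> real \<Rightarrow> ((real \<Rightarrow> real) \<Rightarrow> ennreal) \<Rightarrow> ennreal" where
  "expect_mu hl hu wl wu \<Phi> =
     (\<integral>\<^sup>+ h. (\<integral>\<^sup>+ w. (\<integral>\<^sup>+ \<xi>. \<Phi> (ubar h w \<xi>) \<partial>unif_real 0 (2 * pi))
        \<partial>unif_real wl wu) \<partial>unif_real hl hu)"

definition L1_dist :: "(real \<Rightarrow> real) \<Rightarrow> (real \<Rightarrow> real) \<Rightarrow> ennreal" where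
  "L1_dist f g = (\<integral>\<^sup>+ x \<in> {0..2 * pi}. ennreal \<bar>f x - g x\<bar> \<partial>lborel)"

text \<open>Vectors in R^d are functions nat => real, only indices < d matter.
  R is a shallow ReLU network (hidden width fno_width) from R^2 to R^dv:
  R(y) = RB relu(RA y + Rc) + Rd.  Layer l (l < fno_L) has W l, the Fourier
  multipliers P l k (|k| <= kmax) and bias coefficients bh l k.\<close>
record fno =
  fno_N :: nat
  fno_dv :: nat
  fno_kmax :: nat
  fno_L :: nat
  fno_width :: nat
  fno_RA :: "nat \<Rightarrow> nat \<Rightarrow> real"
  fno_Rc :: "nat \<Rightarrow> real"
  fno_RB :: "nat \<Rightarrow> nat \<Rightarrow> real"
  fno_Rd :: "nat \<Rightarrow> real"
  fno_W :: "nat \<Rightarrow> nat \<Rightarrow> nat \<Rightarrow> real"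
  fno_P :: "nat \<Rightarrow> int \<Rightarrow> nat \<Rightarrow> nat \<Rightarrow> complex"
  fno_bh :: "nat \<Rightarrow> int \<Rightarrow> nat \<Rightarrow> complex"
  fno_Q :: "nat \<Rightarrow> real"

definition dft :: "nat \<Rightarrow> (real \<Rightarrow> real) \<Rightarrow> int \<Rightarrow> complex" where
  "dft N v k = (1 / of_nat N) *
     (\<Sum>j=1..N. complex_of_real (v (2 * pi * real j / real N))
                 * exp (- \<i> * of_int k * complex_of_real (2 * pi * real j / real N)))"

definition fno_lift :: "fno \<Rightarrow> (real \<Rightarrow> real) \<Rightarrow> real \<Rightarrow> nat \<Rightarrow> real" where
  "fno_lift F u x = (\<lambda>i. (\<Sum>r<fno_width F. fno_RB F i r *
       relu (fno_RA F r 0 * u x + fno_RA F r 1 * tmod x + fno_Rc F r)) + fno_Rd F i)"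

definition fno_layer :: "fno \<Rightarrow> nat \<Rightarrow> (real \<Rightarrow> nat \<Rightarrow> real) \<Rightarrow> real \<Rightarrow> nat \<Rightarrow> real" where
  "fno_layer F l v x = (\<lambda>i. relu (
       (\<Sum>j<fno_dv F. fno_W F l i j * v x j)
     + Re (\<Sum>k\<in>{- int (fno_kmax F)..int (fno_kmax F)}.
             fno_bh F l k i * exp (\<i> * of_int k * complex_of_real x))
     + Re (\<Sum>k\<in>{- int (fno_kmax F)..int (fno_kmax F)}. \<Sum>j<fno_dv F.
             fno_P F l k i j * dft (fno_N F) (\<lambda>y. v y j) k
             * exp (\<i> * of_int k * complex_of_real x))))"

fun fno_hidden :: "fno \<Rightarrow> nat \<Rightarrow> (real \<Rightarrow> real) \<Rightarrow> real \<Rightarrow> nat \<Rightarrow> real" where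
  "fno_hidden F 0 u = fno_lift F u"
| "fno_hidden F (Suc l) u = fno_layer F l (fno_hidden F l u)"

definition fno_eval :: "fno \<Rightarrow> (real \<Rightarrow> real) \<Rightarrow> real \<Rightarrow> real" where
  "fno_eval F u x = (\<Sum>i<fno_dv F. fno_Q F i * fno_hidden F (fno_L F) u x i)"

definition fno_depth :: "fno \<Rightarrow> nat" where
  "fno_depth F = fno_L F"

text \<open>Total number of real parameters (a complex parameter counts as two).\<close>
definition fno_size :: "fno \<Rightarrow> nat" where
  "fno_size F =
     (2 * fno_width F + fno_width F + fno_dv F * fno_width F + fno_dv F)
   + fno_L F * (fno_dv F * fno_dv F
                + 2 * (2 * fno_kmax F + 1) * fno_dv F * fno_dv F
                + 2 * (2 * fno_kmax F + 1) * fno_dv F)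
   + fno_dv F"

end

theory Submission
  imports Defs
begin


definition meanN :: "nat \<Rightarrow> (real \<Rightarrow> real) \<Rightarrow> real" where
  "meanN N f = (1 / real N) * (\<Sum>j=1..N. f (2 * pi * real j / real N))"

lemma dft0: "dft N f 0 = complex_of_real (meanN N f)"
  unfolding dft_def meanN_def by (simp add: sum_divide_distrib)

lemma meanN_const: "N \<ge> 1 \<Longrightarrow> meanN N (\<lambda>y. c) = c"
  unfolding meanN_def by simp

lemma meanN_cmult: "meanN N (\<lambda>y. f y * c) = meanN N f * c"
  unfolding meanN_def by (simp add: sum_distrib_right)

definition hc :: "nat \<Rightarrow> real" where "hc k = sin_coeff k * (2 * pi) ^ k"

definition Wm :: "nat \<Rightarrow> real \<Rightarrow> real \<Rightarrow> real \<Rightarrow> real \<Rightarrow> nat \<Rightarrow> nat \<Rightarrow> nat \<Rightarrow> real" where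
  "Wm S Bc M Mh \<beta> l i j =
    (if l < S then
       (if (i = 0 \<and> j = 0) \<or> (i = 1 \<and> j = 1) \<or> (i = 2 \<and> j = 1) then 1
        else if (i = 2 \<and> j = 0) \<or> (i = 4 \<and> j = 0) then Bc else 0)
     else if l = S then
       (if (i = 0 \<and> j = 3) \<or> (i = 1 \<and> j = 3) then - M * \<beta>
        else if i = 2 \<and> j = 1 then 1 else 0)
     else
       (if i = 0 \<and> j = 2 then 1 else if i = 0 \<and> j = 0 then Mh
        else if i = 0 \<and> j = 1 then - Mh else 0))"

definition Pm :: "nat \<Rightarrow> real \<Rightarrow> real \<Rightarrow> real \<Rightarrow> nat \<Rightarrow> int \<Rightarrow> nat \<Rightarrow> nat \<Rightarrow> complex" where
  "Pm S K M s l k i j =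
    (if l < S \<and> k = 0 then
       (if (i = 1 \<and> j = 5) \<or> (i = 2 \<and> j = 5) \<or> (i = 3 \<and> j = 4) \<or> (i = 4 \<and> j = 4)
           \<or> (i = 5 \<and> j = 5) then 1
        else if (i = 1 \<and> j = 2) \<or> (i = 2 \<and> j = 2) then -1
        else if (i = 3 \<and> j = 0) \<or> (i = 4 \<and> j = 0) then - complex_of_real K else 0)
     else if l = S \<and> k = 1 \<and> j = 0 \<and> (i = 0 \<or> i = 1) then
        complex_of_real M * exp (- \<i> * complex_of_real s)
     else 0)"

definition bm :: "nat \<Rightarrow> real \<Rightarrow> real \<Rightarrow> real \<Rightarrow> real \<Rightarrow> real \<Rightarrow> nat \<Rightarrow> int \<Rightarrow> nat \<Rightarrow> complex" where
  "bm S K Bc M Mh \<beta> l k i = complex_of_real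
    (if k \<noteq> 0 then 0
     else if l < S then
       (if i = 2 then - Bc else if i = 3 then hc (S - 1 - l) + K
        else if i = 4 then hc (S - 1 - l) + K - Bc else 0)
     else if l = S then
       (if i = 0 then M * \<beta> * K else if i = 1 then M * \<beta> * K - 1 else 0)
     else (if i = 0 then - Mh else 0))"

definition mkF :: "nat \<Rightarrow> nat \<Rightarrow> real \<Rightarrow> real \<Rightarrow> real \<Rightarrow> real \<Rightarrow> real \<Rightarrow> real \<Rightarrow> real \<Rightarrow> fno" where
  "mkF N S hl K Bc M Mh \<beta> s = \<lparr> fno_N = N, fno_dv = 6, fno_kmax = 1, fno_L = S + 2, fno_width = 2,
    fno_RA = (\<lambda>r i. if i = 0 \<and> r < 2 then 1 / hl else 0),
    fno_Rc = (\<lambda>r. if r = 1 then -1 else 0),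
    fno_RB = (\<lambda>i r. if r = 0 then (if i = 0 then 1 else if i = 4 then K else if i = 5 then hl else 0)
                   else if r = 1 then (if i = 0 then -1 else if i = 4 then - K else 0) else 0),
    fno_Rd = (\<lambda>i. if i = 3 then K else 0),
    fno_W = Wm S Bc M Mh \<beta>,
    fno_P = Pm S K M s,
    fno_bh = bm S K Bc M Mh \<beta>,
    fno_Q = (\<lambda>i. if i = 0 then 1 else 0) \<rparr>"

lemma int_set3: "{- int 1..int 1} = {-1, 0, 1}" by auto

lemma sum6: "(\<Sum>j<(6::nat). f j) = f 0 + f 1 + f 2 + f 3 + f 4 + (f 5 :: 'a::comm_monoid_add)"
  by (simp add: eval_nat_numeral add.assoc)

lemma layer_expand:
  "fno_layer (mkF N S hl K Bc M Mh \<beta> s) l v x i = relu (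
     (\<Sum>j<6. Wm S Bc M Mh \<beta> l i j * v x j)
     + Re (bm S K Bc M Mh \<beta> l 0 i)
     + Re (\<Sum>j<6. Pm S K M s l 0 i j * dft N (\<lambda>y. v y j) 0)
     + Re (\<Sum>j<6. Pm S K M s l 1 i j * dft N (\<lambda>y. v y j) 1 * exp (\<i> * complex_of_real x)))"
proof -
  have P: "\<And>j. Pm S K M s l (-1) i j = 0" by (simp add: Pm_def)
  have b: "bm S K Bc M Mh \<beta> l (-1) i = 0" "bm S K Bc M Mh \<beta> l 1 i = 0" by (simp_all add: bm_def)
  show ?thesis
    unfolding fno_layer_def mkF_def fno.select_convs int_set3
    by (simp add: P b add.assoc del: Re_sum)
qed

fun Hs :: "real \<Rightarrow> real \<Rightarrow> nat \<Rightarrow> real" where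
  "Hs p m 0 = 0"
| "Hs p m (Suc l) = Hs p m l + m - p * Hs p m l"

fun Qs :: "nat \<Rightarrow> real \<Rightarrow> real \<Rightarrow> nat \<Rightarrow> real" where
  "Qs S K p 0 = K"
| "Qs S K p (Suc l) = Qs S K p l * p - K * p + hc (S - 1 - l) + K"

definition stv :: "(real \<Rightarrow> real) \<Rightarrow> real \<Rightarrow> real \<Rightarrow> real \<Rightarrow> nat \<Rightarrow> real \<Rightarrow> nat \<Rightarrow> real \<Rightarrow> nat \<Rightarrow> real" where
  "stv ind h p m S K l x i =
     (if i = 0 then ind x else if i = 1 then Hs p m l else if i = 2 then ind x * Hs p m l
      else if i = 3 then Qs S K p l else if i = 4 then ind x * Qs S K p l
      else if l = 0 then h * ind x else m)"

lemma relu_id: "0 \<le> t \<Longrightarrow> relu t = t" by (simp add: relu_def)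
lemma relu_neg: "t \<le> 0 \<Longrightarrow> relu t = 0" by (simp add: relu_def)

lemma relu_prod:
  assumes "ind = 0 \<or> ind = 1" "0 \<le> X" "X \<le> Bc"
  shows "relu (X + Bc * ind - Bc) = ind * X"
  using assms by (auto simp: relu_def)

lemma hidden_main:
  fixes ind :: "real \<Rightarrow> real" and N S :: nat and hl K Bc M Mh \<beta> s h p m :: real
  defines "F \<equiv> mkF N S hl K Bc M Mh \<beta> s"
  assumes N: "N \<ge> 1" and hl: "hl > 0" "h \<ge> hl"
    and ind01: "\<And>x. ind x = 0 \<or> ind x = 1"
    and p: "p = meanN N ind" and m: "m = h * p"
    and bnd: "\<And>l. l \<le> S \<Longrightarrow> 0 \<le> Hs p m l \<and> Hs p m l \<le> Bc \<and> 0 \<le> Qs S K p l \<and> Qs S K p l \<le> Bc"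
    and m0: "m \<ge> 0"
  shows "l \<le> S \<Longrightarrow> \<forall>x. \<forall>i<6. fno_hidden F l (\<lambda>x. h * ind x) x i = stv ind h p m S K l x i"
proof (induction l)
  case 0
  have K0: "Qs S K p 0 = K" by simp
  show ?case
  proof (intro allI impI)
    fix x :: real and i :: nat assume i: "i < 6"
    have r1: "relu (1 / hl * (h * ind x)) = h * ind x / hl"
      using ind01[of x] hl by (auto simp: relu_def)
    have r2: "relu (1 / hl * (h * ind x) - 1) = ind x * (h / hl - 1)"
      using ind01[of x] hl by (auto simp: relu_def field_simps)
    have "i = 0 \<or> i = 1 \<or> i = 2 \<or> i = 3 \<or> i = 4 \<or> i = 5" using i by auto
    then show "fno_hidden F 0 (\<lambda>x. h * ind x) x i = stv ind h p m S K 0 x i"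
    proof -
      assume i6: "i = 0 \<or> i = 1 \<or> i = 2 \<or> i = 3 \<or> i = 4 \<or> i = 5"
      have "fno_hidden F 0 (\<lambda>x. h * ind x) x i = (if i = 0 then h * ind x / hl - ind x * (h / hl - 1)
        else if i = 4 then K * (h * ind x / hl) - K * (ind x * (h / hl - 1))
        else if i = 5 then hl * (h * ind x / hl) else if i = 3 then K else 0)"
        using r1 r2 by (simp add: F_def mkF_def fno_lift_def eval_nat_numeral)
      also have "\<dots> = stv ind h p m S K 0 x i"
        using i6 hl by (auto simp: stv_def field_simps)
      finally show ?thesis .
    qed
  qed
next
  case (Suc l)
  then have IH: "\<And>x i. i < 6 \<Longrightarrow> fno_hidden F l (\<lambda>x. h * ind x) x i = stv ind h p m S K l x i"
    and lS: "l < S" by auto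
  have ch: "\<And>j. j < 6 \<Longrightarrow> (\<lambda>y. fno_hidden F l (\<lambda>x. h * ind x) y j) = (\<lambda>y. stv ind h p m S K l y j)"
    using IH by auto
  have mean5: "meanN N (\<lambda>y. stv ind h p m S K l y 5) = m"
    using N by (cases "l = 0") (auto simp: stv_def meanN_const p m meanN_def sum_distrib_left[symmetric])
  have mean0: "meanN N (\<lambda>y. stv ind h p m S K l y 0) = p" by (simp add: stv_def p)
  have mean2: "meanN N (\<lambda>y. stv ind h p m S K l y 2) = p * Hs p m l"
    by (simp add: stv_def p meanN_cmult)
  have mean4: "meanN N (\<lambda>y. stv ind h p m S K l y 4) = p * Qs S K p l"
    by (simp add: stv_def p meanN_cmult)
  have bS: "0 \<le> Hs p m (Suc l) \<and> Hs p m (Suc l) \<le> Bc \<and> 0 \<le> Qs S K p (Suc l) \<and> Qs S K p (Suc l) \<le> Bc"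
    using bnd Suc.prems by blast
  show ?case
  proof (intro allI impI)
    fix x :: real and i :: nat assume i: "i < 6"
    have e: "fno_hidden F (Suc l) (\<lambda>x. h * ind x) x i = relu (
     (\<Sum>j<6. Wm S Bc M Mh \<beta> l i j * stv ind h p m S K l x j)
     + Re (bm S K Bc M Mh \<beta> l 0 i)
     + Re (\<Sum>j<6. Pm S K M s l 0 i j * complex_of_real (meanN N (\<lambda>y. stv ind h p m S K l y j)))
     + Re (\<Sum>j<6. Pm S K M s l 1 i j * dft N (\<lambda>y. stv ind h p m S K l y j) 1 * exp (\<i> * complex_of_real x)))"
      unfolding fno_hidden.simps F_def layer_expand
      using IH ch by (simp add: sum6 dft0 F_def)
    have "i = 0 \<or> i = 1 \<or> i = 2 \<or> i = 3 \<or> i = 4 \<or> i = 5" using i by auto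
    then show "fno_hidden F (Suc l) (\<lambda>x. h * ind x) x i = stv ind h p m S K (Suc l) x i"
    proof (elim disjE)
      assume "i = 0" then show ?thesis unfolding e using lS ind01[of x]
        by (auto simp: sum6 Wm_def Pm_def bm_def stv_def relu_def)
    next
      assume "i = 1" then show ?thesis unfolding e using lS bS mean5 mean2
        by (simp add: sum6 Wm_def Pm_def bm_def stv_def relu_id algebra_simps)
    next
      assume "i = 2" then show ?thesis unfolding e using lS bS mean5 mean2 relu_prod[OF ind01[of x], of "Hs p m (Suc l)" Bc]
        by (simp add: sum6 Wm_def Pm_def bm_def stv_def algebra_simps)
    next
      assume "i = 3" then show ?thesis unfolding e using lS bS mean0 mean4
        by (simp add: sum6 Wm_def Pm_def bm_def stv_def relu_id algebra_simps)
    next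
      assume "i = 4" then show ?thesis unfolding e using lS bS mean0 mean4 relu_prod[OF ind01[of x], of "Qs S K p (Suc l)" Bc]
        by (simp add: sum6 Wm_def Pm_def bm_def stv_def algebra_simps)
    next
      assume "i = 5" then show ?thesis unfolding e using lS mean5 m0
        by (simp add: sum6 Wm_def Pm_def bm_def stv_def relu_id)
    qed
  qed
qed

lemma eval_main:
  fixes ind :: "real \<Rightarrow> real" and N S :: nat and hl K Bc M Mh \<beta> s h p m :: real
  defines "F \<equiv> mkF N S hl K Bc M Mh \<beta> s"
  assumes N: "N \<ge> 1" and hl: "hl > 0" "h \<ge> hl"
    and ind01: "\<And>x. ind x = 0 \<or> ind x = 1"
    and p: "p = meanN N ind" and m: "m = h * p"
    and bnd: "\<And>l. l \<le> S \<Longrightarrow> 0 \<le> Hs p m l \<and> Hs p m l \<le> Bc \<and> 0 \<le> Qs S K p l \<and> Qs S K p l \<le> Bc"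
    and m0: "m \<ge> 0"
  shows "fno_eval F (\<lambda>x. h * ind x) x =
    relu (Hs p m S + Mh * relu (M * (Re (exp (- \<i> * complex_of_real s) * dft N ind 1 * exp (\<i> * complex_of_real x))
                                    - \<beta> * (Qs S K p S - K)))
                   - Mh * relu (M * (Re (exp (- \<i> * complex_of_real s) * dft N ind 1 * exp (\<i> * complex_of_real x))
                                    - \<beta> * (Qs S K p S - K)) - 1) - Mh)"
proof -
  have IH: "\<And>x i. i < 6 \<Longrightarrow> fno_hidden F S (\<lambda>x. h * ind x) x i = stv ind h p m S K S x i"
    using hidden_main[OF N hl ind01 p m bnd m0, of S] unfolding F_def by auto
  have ch: "\<And>j. j < 6 \<Longrightarrow> (\<lambda>y. fno_hidden F S (\<lambda>x. h * ind x) y j) = (\<lambda>y. stv ind h p m S K S y j)"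
    using IH by auto
  have d0: "(\<lambda>y. stv ind h p m S K S y 0) = ind" by (simp add: stv_def)
  have HS: "0 \<le> Hs p m S" using bnd by auto
  define G where "G y = Re (exp (- \<i> * complex_of_real s) * dft N ind 1 * exp (\<i> * complex_of_real y))
                                    - \<beta> * (Qs S K p S - K)" for y
  have L1: "\<And>y. fno_hidden F (Suc S) (\<lambda>x. h * ind x) y 0 = relu (M * G y)"
    "\<And>y. fno_hidden F (Suc S) (\<lambda>x. h * ind x) y 1 = relu (M * G y - 1)"
    "\<And>y. fno_hidden F (Suc S) (\<lambda>x. h * ind x) y 2 = Hs p m S"
    unfolding fno_hidden.simps F_def layer_expand
    using IH ch d0 HS
    by (simp_all add: sum6 dft0 F_def Wm_def Pm_def bm_def stv_def G_def relu_id algebra_simps)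
  have e1: "fno_eval F (\<lambda>x. h * ind x) x = fno_hidden F (Suc (Suc S)) (\<lambda>x. h * ind x) x 0"
    unfolding fno_eval_def by (simp add: F_def mkF_def sum6 del: fno_hidden.simps)
  have e2: "fno_hidden F (Suc (Suc S)) (\<lambda>x. h * ind x) x 0 =
     relu (Hs p m S + Mh * relu (M * G x) - Mh * relu (M * G x - 1) - Mh)"
    unfolding fno_hidden.simps(2)[of _ "Suc S"] F_def layer_expand
    using L1[unfolded F_def] by (simp add: sum6 Wm_def Pm_def bm_def algebra_simps del: fno_hidden.simps)
  show ?thesis using e1 e2 by (simp add: G_def)
qed



definition boxind :: "real \<Rightarrow> real \<Rightarrow> real \<Rightarrow> real" where
  "boxind w \<xi> x = (if \<exists>k::int. \<bar>x - \<xi> - 2 * pi * of_int k\<bar> \<le> w / 2 then 1 else 0)"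

lemma ubar_box: "ubar h w \<xi> = (\<lambda>x. h * boxind w \<xi> x)"
  by (auto simp: ubar_def boxind_def fun_eq_iff)

lemma box_int:
  assumes N: "N \<ge> 1"
  shows "boxind w \<xi> (2 * pi * of_int j / real N) = 1 \<longleftrightarrow>
    (\<exists>k::int. \<lceil>(\<xi> - w/2) / (2*pi/real N)\<rceil> \<le> j - k * int N \<and> j - k * int N \<le> \<lfloor>(\<xi> + w/2) / (2*pi/real N)\<rfloor>)"
proof -
  have d: "2*pi/real N > 0" using N by simp
  have key: "\<And>k::int. \<bar>2 * pi * of_int j / real N - \<xi> - 2 * pi * of_int k\<bar> \<le> w / 2 \<longleftrightarrow>
     (\<lceil>(\<xi> - w/2) / (2*pi/real N)\<rceil> \<le> j - k * int N \<and> j - k * int N \<le> \<lfloor>(\<xi> + w/2) / (2*pi/real N)\<rfloor>)"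
  proof -
    fix k :: int
    have e: "2 * pi * of_int j / real N - 2 * pi * of_int k = of_int (j - k * int N) * (2*pi/real N)"
      using N by (simp add: field_simps)
    have "\<bar>2 * pi * of_int j / real N - \<xi> - 2 * pi * of_int k\<bar> \<le> w / 2 \<longleftrightarrow>
          (\<xi> - w/2) \<le> of_int (j - k * int N) * (2*pi/real N) \<and> of_int (j - k * int N) * (2*pi/real N) \<le> \<xi> + w/2"
      using e by (smt (verit))
    also have "\<dots> \<longleftrightarrow> (\<xi> - w/2) / (2*pi/real N) \<le> of_int (j - k * int N) \<and> of_int (j - k * int N) \<le> (\<xi> + w/2) / (2*pi/real N)"
      by (simp only: pos_divide_le_eq[OF d] pos_le_divide_eq[OF d])
    also have "\<dots> \<longleftrightarrow> (\<lceil>(\<xi> - w/2) / (2*pi/real N)\<rceil> \<le> j - k * int N \<and> j - k * int N \<le> \<lfloor>(\<xi> + w/2) / (2*pi/real N)\<rfloor>)"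
      by (simp add: ceiling_le_iff le_floor_iff)
    finally show "?thesis k" .
  qed
  show ?thesis unfolding boxind_def using key by auto
qed

lemma sum_box:
  fixes g :: "int \<Rightarrow> complex"
  assumes N: "N \<ge> 1" and len: "B - A + 1 \<le> int N"
    and A: "A = \<lceil>(\<xi> - w/2) / (2*pi/real N)\<rceil>" and B: "B = \<lfloor>(\<xi> + w/2) / (2*pi/real N)\<rfloor>"
    and per: "\<And>j k. g (j + k * int N) = g j"
  shows "(\<Sum>j=1..N. complex_of_real (boxind w \<xi> (2 * pi * real j / real N)) * g (int j)) = (\<Sum>j\<in>{A..B}. g j)"
proof -
  define \<phi> where "\<phi> j = (j - 1) mod int N + 1" for j
  define J where "J = {j \<in> {1..int N}. \<exists>k::int. A \<le> j - k * int N \<and> j - k * int N \<le> B}"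
  have Npos: "int N > 0" using N by simp
  have inj: "inj_on \<phi> {A..B}"
  proof (rule inj_onI)
    fix a b assume a: "a \<in> {A..B}" and b: "b \<in> {A..B}" and e: "\<phi> a = \<phi> b"
    then have "(a - 1) mod int N = (b - 1) mod int N" by (simp add: \<phi>_def)
    then have "int N dvd (a - b)"
      by (metis diff_diff_eq2 mod_eq_dvd_iff diff_add_cancel add_diff_cancel_right)
    then obtain q where q: "a - b = int N * q" by (auto elim: dvdE)
    have "\<bar>a - b\<bar> < int N" using a b len by auto
    then have "q = 0" using q Npos
      by (smt (verit, ccfv_SIG) mult_le_cancel_left1 mult_minus_right abs_of_nonneg zero_less_mult_iff)
    then show "a = b" using q by simp
  qed
  have phi_eq: "\<And>j. \<phi> j = j - ((j - 1) div int N) * int N"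
    by (simp add: \<phi>_def mod_div_mult_eq[symmetric] algebra_simps minus_div_mult_eq_mod[symmetric])
  have img: "\<phi> ` {A..B} = J"
  proof
    show "\<phi> ` {A..B} \<subseteq> J"
    proof
      fix y assume "y \<in> \<phi> ` {A..B}"
      then obtain j where j: "j \<in> {A..B}" "y = \<phi> j" by auto
      have r: "1 \<le> \<phi> j \<and> \<phi> j \<le> int N" unfolding \<phi>_def using Npos
        by (simp add: pos_mod_bound pos_mod_sign add1_zle_eq)
      have "A \<le> \<phi> j - (- ((j - 1) div int N)) * int N \<and> \<phi> j - (- ((j - 1) div int N)) * int N \<le> B"
        using j(1) by (simp add: phi_eq)
      then show "y \<in> J" unfolding J_def j(2) mem_Collect_eq atLeastAtMost_iff using r by blast
    qed
  next
    show "J \<subseteq> \<phi> ` {A..B}"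
    proof
      fix y assume "y \<in> J"
      then obtain k where y: "1 \<le> y" "y \<le> int N" "A \<le> y - k * int N" "y - k * int N \<le> B"
        unfolding J_def by auto
      have "\<phi> (y - k * int N) = y"
      proof -
        have "(y - k * int N - 1) mod int N = (y - 1) mod int N"
          by (metis (no_types, opaque_lifting) diff_diff_eq2 diff_add_cancel mod_mult_self1 add.commute diff_conv_add_uminus mult_minus_left)
        also have "\<dots> = y - 1" using y by (simp add: mod_pos_pos_trivial)
        finally show ?thesis by (simp add: \<phi>_def)
      qed
      then show "y \<in> \<phi> ` {A..B}" using y by force
    qed
  qed
  have per2: "\<And>j. g (\<phi> j) = g j"
    using per[of _ "- ((_ - 1) div int N)"] by (metis phi_eq per diff_conv_add_uminus mult_minus_left)
  have "(\<Sum>j\<in>{A..B}. g j) = (\<Sum>j\<in>{A..B}. g (\<phi> j))" using per2 by simp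
  also have "\<dots> = (\<Sum>j\<in>J. g j)" using sum.reindex[OF inj, of g] img by simp
  finally have s1: "(\<Sum>j\<in>{A..B}. g j) = (\<Sum>j\<in>J. g j)" .
  have s2: "(\<Sum>j=1..N. complex_of_real (boxind w \<xi> (2 * pi * real j / real N)) * g (int j))
      = (\<Sum>j\<in>{1..int N}. complex_of_real (boxind w \<xi> (2 * pi * of_int j / real N)) * g j)"
  proof -
    have "int ` {1..N} = {1..int N}" by (simp add: image_int_atLeastAtMost)
    then show ?thesis
      using sum.reindex[of int "{1..N}" "\<lambda>j. complex_of_real (boxind w \<xi> (2 * pi * of_int j / real N)) * g j"]
      by simp
  qed
  have s3: "(\<Sum>j\<in>{1..int N}. complex_of_real (boxind w \<xi> (2 * pi * of_int j / real N)) * g j) = (\<Sum>j\<in>J. g j)"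
  proof -
    have "(\<Sum>j\<in>{1..int N}. complex_of_real (boxind w \<xi> (2 * pi * of_int j / real N)) * g j)
        = (\<Sum>j\<in>{1..int N}. if j \<in> J then g j else 0)"
    proof (rule sum.cong[OF refl])
      fix j assume j: "j \<in> {1..int N}"
      have "boxind w \<xi> (2 * pi * of_int j / real N) = 0 \<or> boxind w \<xi> (2 * pi * of_int j / real N) = 1"
        by (simp add: boxind_def)
      then show "complex_of_real (boxind w \<xi> (2 * pi * of_int j / real N)) * g j = (if j \<in> J then g j else 0)"
        using box_int[OF N, of w \<xi> j] j unfolding J_def A B by auto
    qed
    also have "\<dots> = (\<Sum>j\<in>J. g j)" by (simp add: sum.If_cases J_def) (rule sum.cong; auto)
    finally show ?thesis .
  qed
  show ?thesis using s1 s2 s3 by simp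
qed

lemma one_minus_cis: "1 - cis (- x) = cis (- x/2) * (2 * \<i> * complex_of_real (sin (x/2)))"
proof -
  have c: "cos x = 1 - 2 * sin (x/2) ^ 2" using cos_double_sin[of "x/2"] by simp
  have s: "sin x = 2 * sin (x/2) * cos (x/2)" using sin_double[of "x/2"] by simp
  show ?thesis by (simp add: complex_eq_iff c s power2_eq_square algebra_simps)
qed

lemma geo_cis:
  fixes d :: real
  assumes "sin (d/2) \<noteq> 0"
  shows "(\<Sum>l<n. cis (- (real l * d))) = cis (- ((real n - 1) * d / 2)) * complex_of_real (sin (real n * d / 2) / sin (d / 2))"
proof -
  have e1: "(\<Sum>l<n. cis (- (real l * d))) = (\<Sum>l<n. cis (- d) ^ l)"
  proof (rule sum.cong[OF refl])
    fix l assume "l \<in> {..<n}"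
    have "cis (-d) ^ l = cis (real l * (-d))" by (rule Complex.DeMoivre)
    then show "cis (- (real l * d)) = cis (- d) ^ l" by simp
  qed
  have e2: "(1 - cis (- d)) * (\<Sum>l<n. cis (- d) ^ l) = 1 - cis (- (real n * d))"
    using one_diff_power_eq[of "cis (-d)" n] by (simp add: Complex.DeMoivre)
  have ne: "cis (- d/2) * (2 * \<i> * complex_of_real (sin (d/2))) \<noteq> 0"
    using assms by simp
  have "(\<Sum>l<n. cis (- d) ^ l) = (1 - cis (- (real n * d))) / (cis (- d/2) * (2 * \<i> * complex_of_real (sin (d/2))))"
    using e2 ne by (simp add: one_minus_cis field_simps)
  also have "\<dots> = cis (- (real n * d)/2) * (2 * \<i> * complex_of_real (sin (real n * d/2))) / (cis (- d/2) * (2 * \<i> * complex_of_real (sin (d/2))))"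
    by (simp add: one_minus_cis)
  also have "\<dots> = (cis (- (real n * d)/2) / cis (- d/2)) * complex_of_real (sin (real n * d/2) / sin (d/2))"
    using assms by (simp add: field_simps)
  also have "cis (- (real n * d)/2) / cis (- d/2) = cis (- ((real n - 1) * d / 2))"
    by (simp add: cis_divide algebra_simps diff_divide_distrib)
  finally show ?thesis using e1 by simp
qed

lemma box_facts:
  assumes N: "N \<ge> 2" and d: "\<delta> = 2 * pi / real N" and w1: "\<delta> \<le> w" and w2: "w + \<delta> \<le> 2 * pi"
  shows "\<exists>n::nat. \<exists>\<mu>. 1 \<le> n \<and> n \<le> N \<and> meanN N (boxind w \<xi>) = real n / real N \<and>
     dft N (boxind w \<xi>) 1 = cis (- \<mu>) * complex_of_real (sin (real n * \<delta> / 2) / (real N * sin (\<delta> / 2))) \<and>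
     \<bar>\<mu> - \<xi>\<bar> \<le> \<delta> / 2 \<and> w - \<delta> \<le> real n * \<delta> \<and> real n * \<delta> \<le> w + \<delta>"
proof -
  define A where "A = \<lceil>(\<xi> - w/2) / (2*pi/real N)\<rceil>"
  define B where "B = \<lfloor>(\<xi> + w/2) / (2*pi/real N)\<rfloor>"
  have N1: "N \<ge> 1" using N by simp
  have dpos: "\<delta> > 0" using N d by simp
  have Ad: "(\<xi> - w/2) / \<delta> \<le> of_int A" "of_int A < (\<xi> - w/2) / \<delta> + 1"
    using ceiling_correct[of "(\<xi> - w/2) / \<delta>"] by (auto simp: A_def d)
  have Bd: "of_int B \<le> (\<xi> + w/2) / \<delta>" "(\<xi> + w/2) / \<delta> < of_int B + 1"
    using floor_correct[of "(\<xi> + w/2) / \<delta>"] by (auto simp: B_def d)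
  have wd: "(\<xi> + w/2) / \<delta> - (\<xi> - w/2) / \<delta> = w / \<delta>" by (simp add: diff_divide_distrib[symmetric])
  have w1': "1 \<le> w / \<delta>" using w1 dpos by simp
  have Nd: "real N = 2 * pi / \<delta>" using d N dpos by (simp add: field_simps)
  have w2': "w / \<delta> \<le> real N - 1" using w2 dpos unfolding Nd by (simp add: field_simps)
  have AB: "A \<le> B"
  proof -
    have "real_of_int A < real_of_int B + 1" using Ad Bd wd w1' by linarith
    then show ?thesis by linarith
  qed
  have len: "B - A + 1 \<le> int N"
  proof -
    have "of_int (B - A) \<le> real N - 1" using Ad Bd wd w2' by simp
    then show ?thesis by linarith
  qed
  define n where "n = nat (B - A + 1)"
  have n_int: "int n = B - A + 1" using AB by (simp add: n_def)
  have n_real: "real n = of_int B - of_int A + 1" using n_int by (metis of_int_of_nat_eq of_int_add of_int_diff of_int_1)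
  define \<mu> where "\<mu> = (of_int A + of_int B) * \<delta> / 2"
  have sd: "sin (\<delta> / 2) \<noteq> 0"
  proof -
    have dpi: "\<delta> \<le> pi" unfolding d using N by (simp add: field_simps)
    have "0 < \<delta> / 2" "\<delta> / 2 < pi" using dpos dpi by auto
    then show ?thesis using sin_gt_zero[of "\<delta>/2"] by linarith
  qed
  have sm: "(\<Sum>j=1..N. complex_of_real (boxind w \<xi> (2 * pi * real j / real N)) * 1) = (\<Sum>j\<in>{A..B}. (1::complex))"
    by (rule sum_box[OF N1 len A_def B_def]) simp
  have mean: "meanN N (boxind w \<xi>) = real n / real N"
  proof -
    have "complex_of_real (\<Sum>j=1..N. boxind w \<xi> (2 * pi * real j / real N)) = of_nat n"
    proof -
      have "(\<Sum>j\<in>{A..B}. (1::complex)) = of_nat (card {A..B})" by simp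
      also have "card {A..B} = n" by (simp add: n_def)
      finally show ?thesis using sm by simp
    qed
    then have "(\<Sum>j=1..N. boxind w \<xi> (2 * pi * real j / real N)) = real n"
      by (metis of_real_eq_iff of_real_of_nat_eq)
    then show ?thesis by (simp add: meanN_def)
  qed
  define g where "g j = cis (- (of_int j * \<delta>))" for j :: int
  have per: "\<And>j k. g (j + k * int N) = g j"
  proof -
    fix j k :: int
    have "- (of_int (j + k * int N) * \<delta>) = - (of_int j * \<delta>) + 2 * pi * of_int (- k)"
      using N by (simp add: d field_simps)
    moreover have c1: "cis (2 * pi * real_of_int (- k)) = 1" by (rule cis_multiple_2pi) simp
    ultimately show "g (j + k * int N) = g j"
      unfolding g_def by (simp only: cis_mult[symmetric]) (simp add: c1)
  qed
  have sg: "(\<Sum>j=1..N. complex_of_real (boxind w \<xi> (2 * pi * real j / real N)) * g (int j)) = (\<Sum>j\<in>{A..B}. g j)"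
    by (rule sum_box[OF N1 len A_def B_def per])
  have sAB: "(\<Sum>j\<in>{A..B}. g j) = (\<Sum>l<n. g (A + int l))"
  proof -
    have "(\<lambda>l. A + int l) ` {..<n} = {A..B}"
    proof
      show "(\<lambda>l. A + int l) ` {..<n} \<subseteq> {A..B}" using n_int by auto
      show "{A..B} \<subseteq> (\<lambda>l. A + int l) ` {..<n}"
      proof
        fix j assume j: "j \<in> {A..B}"
        then have "j = A + int (nat (j - A))" "nat (j - A) < n" using n_int by auto
        then show "j \<in> (\<lambda>l. A + int l) ` {..<n}" by blast
      qed
    qed
    moreover have "inj_on (\<lambda>l. A + int l) {..<n}" by (simp add: inj_on_def)
    ultimately show ?thesis using sum.reindex[of "\<lambda>l. A + int l" "{..<n}" g] by simp
  qed
  have sl: "(\<Sum>l<n. g (A + int l)) = cis (- (of_int A * \<delta>)) * (\<Sum>l<n. cis (- (real l * \<delta>)))"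
    by (simp add: g_def sum_distrib_left cis_mult algebra_simps)
  have dft1: "dft N (boxind w \<xi>) 1 = cis (- \<mu>) * complex_of_real (sin (real n * \<delta> / 2) / (real N * sin (\<delta> / 2)))"
  proof -
    have e: "\<And>j::nat. exp (- \<i> * of_int 1 * complex_of_real (2 * pi * real j / real N)) = g (int j)"
      by (simp add: g_def d cis_conv_exp mult.commute)
    have "dft N (boxind w \<xi>) 1 = (1 / of_nat N) * (\<Sum>j\<in>{A..B}. g j)"
      unfolding dft_def e using sg by simp
    also have "\<dots> = (1 / of_nat N) * (cis (- (of_int A * \<delta>)) * (cis (- ((real n - 1) * \<delta> / 2)) * complex_of_real (sin (real n * \<delta> / 2) / sin (\<delta> / 2))))"
      using sAB sl geo_cis[OF sd, of n] by simp
    also have "\<dots> = (cis (- (of_int A * \<delta>)) * cis (- ((real n - 1) * \<delta> / 2))) * (complex_of_real (sin (real n * \<delta> / 2) / sin (\<delta> / 2)) / of_nat N)"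
      by (simp add: algebra_simps)
    also have "cis (- (of_int A * \<delta>)) * cis (- ((real n - 1) * \<delta> / 2)) = cis (- \<mu>)"
      unfolding cis_mult \<mu>_def n_real by (rule arg_cong[where f = cis]) (simp add: field_simps)
    also have "complex_of_real (sin (real n * \<delta> / 2) / sin (\<delta> / 2)) / of_nat N = complex_of_real (sin (real n * \<delta> / 2) / (real N * sin (\<delta> / 2)))"
      by (simp add: field_simps)
    finally show ?thesis .
  qed
  have mu: "\<bar>\<mu> - \<xi>\<bar> \<le> \<delta> / 2"
  proof -
    have a1: "\<xi> - w/2 \<le> of_int A * \<delta>" "of_int A * \<delta> < \<xi> - w/2 + \<delta>"
      using Ad dpos by (simp_all add: divide_le_eq less_divide_eq field_simps)
    have b1: "of_int B * \<delta> \<le> \<xi> + w/2" "\<xi> + w/2 < of_int B * \<delta> + \<delta>"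
      using Bd dpos by (simp_all add: divide_le_eq less_divide_eq field_simps)
    show ?thesis unfolding \<mu>_def using a1 b1 by (simp add: field_simps abs_le_iff)
  qed
  have nd: "w - \<delta> \<le> real n * \<delta> \<and> real n * \<delta> \<le> w + \<delta>"
  proof -
    have a1: "\<xi> - w/2 \<le> of_int A * \<delta>" "of_int A * \<delta> < \<xi> - w/2 + \<delta>"
      using Ad dpos by (simp_all add: divide_le_eq less_divide_eq field_simps)
    have b1: "of_int B * \<delta> \<le> \<xi> + w/2" "\<xi> + w/2 < of_int B * \<delta> + \<delta>"
      using Bd dpos by (simp_all add: divide_le_eq less_divide_eq field_simps)
    show ?thesis unfolding n_real using a1 b1 by (simp add: algebra_simps)
  qed
  have n1: "1 \<le> n" "n \<le> N" using n_int AB len by auto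
  show ?thesis using n1 mean dft1 mu nd by blast
qed



lemma Hs_closed: "Hs p (h * p) l = h * (1 - (1 - p) ^ l)"
proof (induction l)
  case 0 then show ?case by simp
next
  case (Suc l) then show ?case by (simp only: Hs.simps Suc.IH power_Suc) (simp add: algebra_simps)
qed

lemma Hs_bnd:
  assumes "0 \<le> p" "p \<le> 1" "0 \<le> h"
  shows "0 \<le> Hs p (h * p) l \<and> Hs p (h * p) l \<le> h"
proof -
  have "0 \<le> (1 - p) ^ l" "(1 - p) ^ l \<le> 1" using assms by (simp_all add: power_le_one)
  then show ?thesis unfolding Hs_closed using assms by (simp add: mult_left_le)
qed

lemma Qs_poly: "l \<le> S \<Longrightarrow> Qs S K p l - K = (\<Sum>k<l. hc (S - l + k) * p ^ k)"
proof (induction l)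
  case 0 then show ?case by simp
next
  case (Suc l)
  then have IH: "Qs S K p l - K = (\<Sum>k<l. hc (S - l + k) * p ^ k)" by simp
  have "Qs S K p (Suc l) - K = (Qs S K p l - K) * p + hc (S - 1 - l)" by (simp add: algebra_simps)
  also have "\<dots> = (\<Sum>k<l. hc (S - l + k) * p ^ Suc k) + hc (S - Suc l)"
    unfolding IH by (simp add: sum_distrib_right sum_distrib_left algebra_simps)
  also have "\<dots> = (\<Sum>k<Suc l. hc (S - Suc l + k) * p ^ k)"
    unfolding sum.lessThan_Suc_shift using Suc.prems
    by (simp add: Suc_diff_Suc add.commute)
  finally show ?case .
qed

lemma Qs_bnd:
  assumes "0 \<le> p" "p \<le> 1"
  shows "l \<le> S \<Longrightarrow> \<bar>Qs S K p l - K\<bar> \<le> (\<Sum>i<l. \<bar>hc (S - Suc i)\<bar>)"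
proof (induction l)
  case 0 then show ?case by simp
next
  case (Suc l)
  have "\<bar>Qs S K p (Suc l) - K\<bar> = \<bar>(Qs S K p l - K) * p + hc (S - Suc l)\<bar>" by (simp add: algebra_simps)
  also have "\<dots> \<le> \<bar>Qs S K p l - K\<bar> * p + \<bar>hc (S - Suc l)\<bar>"
    using assms by (simp add: abs_mult abs_triangle_ineq[THEN order_trans])
  also have "\<dots> \<le> \<bar>Qs S K p l - K\<bar> + \<bar>hc (S - Suc l)\<bar>"
    using assms by (simp add: mult_left_le)
  also have "\<dots> \<le> (\<Sum>i<Suc l. \<bar>hc (S - Suc i)\<bar>)" using Suc by simp
  finally show ?case .
qed

lemma Qs_bnd2:
  assumes "0 \<le> p" "p \<le> 1" "l \<le> S"
  shows "\<bar>Qs S K p l - K\<bar> \<le> (\<Sum>k<S. \<bar>hc k\<bar>)"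
proof -
  have "(\<Sum>i<l. \<bar>hc (S - Suc i)\<bar>) \<le> (\<Sum>i<S. \<bar>hc (S - Suc i)\<bar>)"
    using assms(3) by (intro sum_mono2) auto
  also have "\<dots> = (\<Sum>k<S. \<bar>hc k\<bar>)" by (rule sum.nat_diff_reindex)
  finally show ?thesis using Qs_bnd[where K=K, OF assms(1,2) assms(3)] by linarith
qed

lemma Qs_taylor:
  assumes "0 \<le> p" "p \<le> 1"
  shows "\<bar>(Qs S K p S - K) - sin (2 * pi * p)\<bar> \<le> (2 * pi) ^ S / fact S"
proof -
  have q: "Qs S K p S - K = (\<Sum>k<S. sin_coeff k * (2 * pi * p) ^ k)"
    using Qs_poly[of S S K p] by (simp add: hc_def power_mult_distrib mult.assoc)
  have m: "\<bar>sin (2 * pi * p) - (\<Sum>k<S. sin_coeff k * (2 * pi * p) ^ k)\<bar> \<le> inverse (fact S) * \<bar>2 * pi * p\<bar> ^ S"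
    by (rule Maclaurin_sin_bound)
  have "\<bar>2 * pi * p\<bar> ^ S \<le> (2 * pi) ^ S"
    using assms by (intro power_mono) (auto simp: abs_mult mult_left_le)
  then have i: "inverse (fact S) * \<bar>2 * pi * p\<bar> ^ S \<le> inverse (fact S) * (2 * pi) ^ S"
    by (intro mult_left_mono) auto
  have "\<bar>(Qs S K p S - K) - sin (2 * pi * p)\<bar> \<le> inverse (fact S) * (2 * pi) ^ S"
    unfolding q using order_trans[OF m i] by (simp add: abs_minus_commute)
  then show ?thesis by (simp add: divide_inverse mult.commute)
qed

lemma pow_fact_le_exp:
  fixes x :: real
  assumes "0 \<le> x"
  shows "x ^ n / fact n \<le> exp x"
proof -
  have "(\<Sum>k\<in>{n}. inverse (fact k) * x ^ k) \<le> (\<Sum>k. inverse (fact k) * x ^ k)"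
    using assms by (intro sum_le_suminf[OF summable_exp]) auto
  then show ?thesis by (simp add: exp_def field_simps)
qed

lemma taylor_geo: "(2 * pi) ^ S / fact S \<le> exp (4 * pi) / 2 ^ S"
proof -
  have "(4 * pi) ^ S / fact S \<le> exp (4 * pi)" by (rule pow_fact_le_exp) simp
  moreover have "(4 * pi) ^ S = 2 ^ S * (2 * pi) ^ S"
  proof -
    have "(4 * pi) ^ S = (2 * (2 * pi)) ^ S" by simp
    also have "\<dots> = 2 ^ S * (2 * pi) ^ S" by (rule power_mult_distrib)
    finally show ?thesis .
  qed
  ultimately show ?thesis by (simp add: field_simps)
qed

lemma sin_ge_half: "0 \<le> (x::real) \<Longrightarrow> x \<le> 1 \<Longrightarrow> x / 2 \<le> sin x"
proof -
  assume x: "0 \<le> x" "x \<le> 1"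
  have m: "\<bar>sin x - (\<Sum>m<3. sin_coeff m * x ^ m)\<bar> \<le> inverse (fact 3) * \<bar>x\<bar> ^ 3"
    by (rule Maclaurin_sin_bound)
  have s: "(\<Sum>m<3. sin_coeff m * x ^ m) = x" by (simp add: eval_nat_numeral sin_coeff_def)
  have x3: "x ^ 3 \<le> x"
  proof -
    have xx: "x * x \<le> 1" using x by (simp add: mult_le_one)
    show ?thesis using mult_left_le[OF xx x(1)] by (simp add: power3_eq_cube mult.assoc)
  qed
  have f: "inverse (fact 3) * \<bar>x\<bar> ^ 3 = x ^ 3 / 6"
  proof -
    have "fact 3 = (6::real)" by (simp add: fact_numeral)
    moreover have "\<bar>x\<bar> = x" using x by simp
    ultimately show ?thesis by (simp add: field_simps)
  qed
  have "\<bar>sin x - x\<bar> \<le> x / 6" using m x3 unfolding s f by linarith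
  then have "x - sin x \<le> x / 6" using abs_ge_self[of "x - sin x"] by (simp add: abs_minus_commute)
  then show ?thesis using x by linarith
qed

lemma sin_ge_mid:
  assumes "0 \<le> a" "a \<le> pi / 2" "a \<le> x" "x \<le> pi - a"
  shows "sin a \<le> sin x"
proof (cases "x \<le> pi / 2")
  case True then show ?thesis using assms by (intro sin_monotone_2pi_le) auto
next
  case False
  have "sin a \<le> sin (pi - x)" using assms False by (intro sin_monotone_2pi_le) auto
  then show ?thesis by simp
qed

lemma cos_gap:
  assumes al: "0 < \<alpha>" "\<alpha> \<le> pi / 2" and t: "0 \<le> t" "t \<le> 2" and b: "\<alpha> \<le> b - t" "b + t \<le> pi - \<alpha>"
  shows "cos (b - t) - cos b \<ge> sin \<alpha> * t / 2" and "cos b - cos (b + t) \<ge> sin \<alpha> * t / 2"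
proof -
  have st: "t / 4 \<le> sin (t / 2)" using sin_ge_half[of "t/2"] t by simp
  have s1: "sin \<alpha> \<le> sin (b - t / 2)" using assms by (intro sin_ge_mid) auto
  have s2: "sin \<alpha> \<le> sin (b + t / 2)" using assms by (intro sin_ge_mid) auto
  have sa: "0 \<le> sin \<alpha>" using al by (intro sin_ge_zero) auto
  have "sin \<alpha> * t / 2 = 2 * sin \<alpha> * (t / 4)" by simp
  also have "\<dots> \<le> 2 * sin (b - t / 2) * sin (t / 2)"
    using s1 st sa t by (intro mult_mono) auto
  also have "\<dots> = cos (b - t) - cos b"
    using cos_diff_cos[of "b - t" b] by (simp add: field_simps)
  finally show "cos (b - t) - cos b \<ge> sin \<alpha> * t / 2" .
  have "sin \<alpha> * t / 2 = 2 * sin \<alpha> * (t / 4)" by simp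
  also have "\<dots> \<le> 2 * sin (b + t / 2) * sin (t / 2)"
    using s2 st sa t by (intro mult_mono) auto
  also have "\<dots> = cos b - cos (b + t)"
    using cos_diff_cos[of b "b + t"] by (simp add: field_simps)
  finally show "cos b - cos (b + t) \<ge> sin \<alpha> * t / 2" .
qed



lemma unif_le:
  fixes f :: "real \<Rightarrow> ennreal"
  assumes lh: "lo \<le> hi" and b: "\<And>x. lo \<le> x \<Longrightarrow> x \<le> hi \<Longrightarrow> f x \<le> c"
  shows "(\<integral>\<^sup>+x. f x \<partial>unif_real lo hi) \<le> c"
proof (cases "lo < hi")
  case True
  let ?M = "uniform_measure lborel {lo..hi}"
  have ps: "prob_space ?M" using True by (intro prob_space_uniform_measure) auto
  have ae: "AE x in ?M. x \<in> {lo..hi}"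
    by (rule AE_uniform_measureI) auto
  have "(\<integral>\<^sup>+x. f x \<partial>?M) \<le> (\<integral>\<^sup>+x. c \<partial>?M)"
    by (rule nn_integral_mono_AE) (use ae b in auto)
  also have "\<dots> = c * emeasure ?M (space ?M)" by (rule nn_integral_const)
  also have "emeasure ?M (space ?M) = 1" by (rule prob_space.emeasure_space_1[OF ps])
  finally show ?thesis using True by (simp add: unif_real_def)
next
  case False
  then have e: "hi = lo" using lh by simp
  let ?M = "return borel lo"
  have ps: "prob_space ?M" by (intro prob_space_return) simp
  have ae: "AE x in ?M. x = lo" by (subst AE_return) auto
  have "(\<integral>\<^sup>+x. f x \<partial>?M) \<le> (\<integral>\<^sup>+x. c \<partial>?M)"
    by (rule nn_integral_mono_AE) (use ae b e in auto)
  also have "\<dots> = c * emeasure ?M (space ?M)" by (rule nn_integral_const)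
  also have "emeasure ?M (space ?M) = 1" by (rule prob_space.emeasure_space_1[OF ps])
  finally show ?thesis using False by (simp add: unif_real_def)
qed

lemma expect_le:
  assumes "hl \<le> hu" "wl \<le> wu"
    and b: "\<And>h w \<xi>. hl \<le> h \<Longrightarrow> h \<le> hu \<Longrightarrow> wl \<le> w \<Longrightarrow> w \<le> wu \<Longrightarrow> \<Phi> (ubar h w \<xi>) \<le> c"
  shows "expect_mu hl hu wl wu \<Phi> \<le> c"
  unfolding expect_mu_def
  by (intro unif_le assms) (auto intro: b)

lemma out_err:
  fixes H h hu Mh M G I :: real
  assumes H: "0 \<le> H" "H \<le> h" "h \<le> hu" and Mh: "h \<le> Mh" and M: "M > 0" and I: "I = 0 \<or> I = 1"
  shows "\<bar>h * I - relu (H + Mh * relu (M * G) - Mh * relu (M * G - 1) - Mh)\<bar>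
     \<le> (h - H) + (if (I = 1 \<and> G \<ge> 1 / M) \<or> (I = 0 \<and> G \<le> 0) then 0 else hu)"
proof -
  define st where "st = relu (M * G) - relu (M * G - 1)"
  have st01: "0 \<le> st" "st \<le> 1" unfolding st_def relu_def by auto
  have o: "relu (H + Mh * relu (M * G) - Mh * relu (M * G - 1) - Mh) = relu (H - Mh * (1 - st))"
    unfolding st_def by (simp add: algebra_simps)
  have o1: "0 \<le> relu (H - Mh * (1 - st))" "relu (H - Mh * (1 - st)) \<le> H"
    using st01 H Mh by (auto simp: relu_def mult_nonneg_nonneg)
  show ?thesis
  proof (cases "(I = 1 \<and> G \<ge> 1 / M) \<or> (I = 0 \<and> G \<le> 0)")
    case True
    then show ?thesis
    proof
      assume a: "I = 1 \<and> G \<ge> 1 / M"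
      then have "M * G \<ge> 1" using M by (simp add: field_simps)
      then have "st = 1" unfolding st_def relu_def by auto
      then show ?thesis unfolding o using a H by (simp add: relu_def)
    next
      assume a: "I = 0 \<and> G \<le> 0"
      then have "M * G \<le> 0" using M by (simp add: mult_nonneg_nonpos)
      then have "st = 0" unfolding st_def relu_def by auto
      then show ?thesis unfolding o using a H Mh by (simp add: relu_def)
    qed
  next
    case False
    have "\<bar>h * I - relu (H - Mh * (1 - st))\<bar> \<le> h" using o1 I H by auto
    then show ?thesis unfolding o using False H by auto
  qed
qed

definition Uset :: "real \<Rightarrow> real \<Rightarrow> real \<Rightarrow> real set" where
  "Uset c w r = (\<Union>k\<in>{\<lceil>(- c - pi) / (2 * pi)\<rceil>..\<lceil>(- c - pi) / (2 * pi)\<rceil> + 2}.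
      {c + 2 * pi * of_int k + w / 2 - r .. c + 2 * pi * of_int k + w / 2 + r}
    \<union> {c + 2 * pi * of_int k - w / 2 - r .. c + 2 * pi * of_int k - w / 2 + r})"

lemma Uset_cover:
  assumes r: "r \<ge> 0" and w: "w \<ge> 0" "w / 2 + r \<le> pi" and y: "0 \<le> y" "y \<le> 2 * pi"
    and k: "\<bar>\<bar>y - c - 2 * pi * of_int k\<bar> - w / 2\<bar> \<le> r"
  shows "y \<in> Uset c w r"
proof -
  define k0 where "k0 = \<lceil>(- c - pi) / (2 * pi)\<rceil>"
  have a: "\<bar>y - c - 2 * pi * of_int k\<bar> \<le> pi" using k w by linarith
  have k1: "(- c - pi) / (2 * pi) \<le> of_int k"
  proof -
    have "- c - pi \<le> 2 * pi * of_int k" using a y by linarith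
    then show ?thesis by (simp add: divide_le_eq mult.commute)
  qed
  have k2: "of_int k \<le> (- c - pi) / (2 * pi) + 2"
  proof -
    have "2 * pi * of_int k \<le> - c - pi + 2 * (2 * pi)" using a y by linarith
    then have "of_int k \<le> (- c - pi + 2 * (2 * pi)) / (2 * pi)" by (simp add: le_divide_eq mult.commute)
    also have "\<dots> = (- c - pi) / (2 * pi) + 2" by (simp add: field_simps)
    finally show ?thesis .
  qed
  have kr: "k \<in> {k0..k0 + 2}"
  proof -
    have "k0 \<le> k" unfolding k0_def using k1 by (simp add: ceiling_le_iff)
    moreover have "k \<le> k0 + 2"
    proof -
      have "(- c - pi) / (2 * pi) \<le> of_int k0" unfolding k0_def by simp
      then have "real_of_int k < real_of_int k0 + 3" using k2 by linarith
      then show ?thesis by linarith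
    qed
    ultimately show ?thesis by simp
  qed
  have "y \<in> {c + 2 * pi * of_int k + w / 2 - r .. c + 2 * pi * of_int k + w / 2 + r}
    \<union> {c + 2 * pi * of_int k - w / 2 - r .. c + 2 * pi * of_int k - w / 2 + r}"
  proof (cases "y - c - 2 * pi * of_int k \<ge> 0")
    case True
    then have "\<bar>(y - c - 2 * pi * of_int k) - w / 2\<bar> \<le> r" using k by simp
    then show ?thesis by (simp add: abs_le_iff)
  next
    case False
    then have "\<bar>- (y - c - 2 * pi * of_int k) - w / 2\<bar> \<le> r" using k by simp
    then show ?thesis by (simp add: abs_le_iff)
  qed
  then show ?thesis unfolding Uset_def using kr k0_def by blast
qed

lemma Uset_sets: "Uset c w r \<in> sets lborel"
  unfolding Uset_def by auto

lemma Uset_measure: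
  assumes r: "r \<ge> 0"
  shows "emeasure lborel (Uset c w r) \<le> ennreal (12 * r)"
proof -
  define k0 where "k0 = \<lceil>(- c - pi) / (2 * pi)\<rceil>"
  define A where "A k = {c + 2 * pi * of_int k + w / 2 - r .. c + 2 * pi * of_int k + w / 2 + r}
    \<union> {c + 2 * pi * of_int k - w / 2 - r .. c + 2 * pi * of_int k - w / 2 + r}" for k :: int
  have U: "Uset c w r = (\<Union>k\<in>{k0..k0+2}. A k)" unfolding Uset_def A_def k0_def by simp
  have Ak: "emeasure lborel (A k) \<le> ennreal (4 * r)" for k
  proof -
    have "emeasure lborel (A k) \<le> emeasure lborel {c + 2 * pi * of_int k + w / 2 - r .. c + 2 * pi * of_int k + w / 2 + r}
       + emeasure lborel {c + 2 * pi * of_int k - w / 2 - r .. c + 2 * pi * of_int k - w / 2 + r}"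
      unfolding A_def by (rule emeasure_subadditive) auto
    also have "\<dots> = ennreal (2 * r) + ennreal (2 * r)" using r by simp
    also have "\<dots> = ennreal (4 * r)" using r by (simp add: ennreal_plus[symmetric])
    finally show ?thesis .
  qed
  have "emeasure lborel (Uset c w r) \<le> (\<Sum>k\<in>{k0..k0+2}. emeasure lborel (A k))"
    unfolding U by (rule emeasure_subadditive_finite) (auto simp: A_def)
  also have "\<dots> \<le> (\<Sum>k\<in>{k0..k0+2}. ennreal (4 * r))" by (intro sum_mono Ak)
  also have "\<dots> = ennreal 3 * ennreal (4 * r)" by simp
  also have "\<dots> = ennreal (12 * r)" using r by (subst ennreal_mult[symmetric]) auto
  finally show ?thesis .
qed

lemma L1_bound:
  assumes b: "\<And>y. 0 \<le> y \<Longrightarrow> y \<le> 2 * pi \<Longrightarrow> \<bar>f y - g y\<bar> \<le> e0 + (if y \<in> U then hu else 0)"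
    and e0: "e0 \<ge> 0" and hu: "hu \<ge> 0" and U: "U \<in> sets lborel" and m: "emeasure lborel U \<le> ennreal m" and m0: "m \<ge> 0"
  shows "L1_dist f g \<le> ennreal (2 * pi * e0 + hu * m)"
proof -
  have "L1_dist f g \<le> (\<integral>\<^sup>+ x. ennreal e0 * indicator {0..2*pi} x + ennreal hu * indicator U x \<partial>lborel)"
    unfolding L1_dist_def
  proof (rule nn_integral_mono)
    fix x
    show "ennreal \<bar>f x - g x\<bar> * indicator {0..2 * pi} x \<le> ennreal e0 * indicator {0..2 * pi} x + ennreal hu * indicator U x"
    proof (cases "x \<in> {0..2*pi}")
      case True
      then have "\<bar>f x - g x\<bar> \<le> e0 + hu * indicator U x" using b[of x] by (auto split: if_splits)
      then have "ennreal \<bar>f x - g x\<bar> \<le> ennreal (e0 + hu * indicator U x)" by (rule ennreal_leI)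
      also have "\<dots> = ennreal e0 + ennreal hu * indicator U x"
        using e0 hu by (simp add: ennreal_plus ennreal_mult indicator_def)
      finally show ?thesis using True by simp
    qed simp
  qed
  also have "\<dots> = (\<integral>\<^sup>+ x. ennreal e0 * indicator {0..2*pi} x \<partial>lborel) + (\<integral>\<^sup>+ x. ennreal hu * indicator U x \<partial>lborel)"
    using U by (intro nn_integral_add) auto
  also have "\<dots> = ennreal e0 * ennreal (2 * pi) + ennreal hu * emeasure lborel U"
    using U by (simp add: nn_integral_cmult_indicator)
  also have "\<dots> \<le> ennreal e0 * ennreal (2 * pi) + ennreal hu * ennreal m"
    by (intro add_left_mono mult_left_mono m) auto
  also have "\<dots> = ennreal (2 * pi * e0 + hu * m)"
  proof -
    have 1: "ennreal e0 * ennreal (2 * pi) = ennreal (2 * pi * e0)"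
      using e0 by (subst ennreal_mult[symmetric]) (auto simp: mult.commute)
    have 2: "ennreal hu * ennreal m = ennreal (hu * m)"
      using hu m0 by (subst ennreal_mult[symmetric]) auto
    show ?thesis unfolding 1 2 using e0 hu m0 by (subst ennreal_plus[symmetric]) auto
  qed
  finally show ?thesis .
qed



lemma cos_shift_int: "cos (x - 2 * pi * of_int k) = cos x"
  by (simp add: cos_diff)

lemma bad_cover:
  fixes c1 \<alpha> t b w \<delta> \<mu> \<xi> Tq e1 M z :: real
  assumes c1: "c1 > 0" and al: "0 < \<alpha>" "\<alpha> \<le> pi / 2" and t: "0 \<le> t" "t \<le> 2"
    and b: "\<alpha> \<le> b - t" "b + t \<le> pi - \<alpha>"
    and hb: "\<bar>b - w / 2\<bar> \<le> \<delta> / 2" and hmu: "\<bar>\<mu> - \<xi>\<bar> \<le> \<delta> / 2"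
    and hT: "\<bar>Tq - c1 * cos b\<bar> \<le> e1"
    and ht: "c1 * (sin \<alpha> * t / 2) \<ge> 1 / M + e1" and M: "M > 0"
    and bad: "\<not> ((boxind w \<xi> z = 1 \<and> c1 * cos (z - \<mu>) - Tq \<ge> 1 / M) \<or> (boxind w \<xi> z = 0 \<and> c1 * cos (z - \<mu>) - Tq \<le> 0))"
  shows "\<exists>k::int. \<bar>\<bar>z - \<xi> - 2 * pi * of_int k\<bar> - w / 2\<bar> \<le> \<delta> + t"
proof -
  define \<eta> where "\<eta> = sin \<alpha> * t / 2"
  have g1: "cos (b - t) - cos b \<ge> \<eta>" and g2: "cos b - cos (b + t) \<ge> \<eta>"
    unfolding \<eta>_def using cos_gap[OF al t b] by auto
  have sa: "0 \<le> sin \<alpha>" using al by (intro sin_ge_zero) auto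
  have eta0: "0 \<le> \<eta>" unfolding \<eta>_def using sa t by simp
  have M1: "1 / M > 0" using M by simp
  have b0: "0 \<le> b - t" "b + t \<le> pi" using al b by auto
  show ?thesis
  proof (cases "boxind w \<xi> z = 1")
    case True
    then have G: "c1 * cos (z - \<mu>) - Tq < 1 / M" using bad by auto
    from True obtain k :: int where k: "\<bar>z - \<xi> - 2 * pi * of_int k\<bar> \<le> w / 2"
      unfolding boxind_def by (auto split: if_splits)
    show ?thesis
    proof (rule ccontr)
      assume "\<not> ?thesis"
      then have "\<not> \<bar>\<bar>z - \<xi> - 2 * pi * of_int k\<bar> - w / 2\<bar> \<le> \<delta> + t" by blast
      then have far: "\<bar>z - \<xi> - 2 * pi * of_int k\<bar> < w / 2 - \<delta> - t" using k by linarith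
      define \<phi> where "\<phi> = z - \<mu> - 2 * pi * of_int k"
      have "\<bar>\<phi>\<bar> \<le> \<bar>z - \<xi> - 2 * pi * of_int k\<bar> + \<bar>\<mu> - \<xi>\<bar>" unfolding \<phi>_def by linarith
      then have ph: "\<bar>\<phi>\<bar> \<le> b - t" using far hb hmu by linarith
      have "cos (b - t) \<le> cos \<bar>\<phi>\<bar>" using ph b0 t by (intro cos_monotone_0_pi_le) auto
      then have "cos (b - t) \<le> cos (z - \<mu>)" unfolding cos_abs_real \<phi>_def cos_shift_int .
      then have "cos b + \<eta> \<le> cos (z - \<mu>)" using g1 by linarith
      then have "c1 * (cos b + \<eta>) \<le> c1 * cos (z - \<mu>)" using c1 by (intro mult_left_mono) auto
      then have "c1 * cos b + c1 * \<eta> - Tq \<le> c1 * cos (z - \<mu>) - Tq" by (simp add: algebra_simps)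
      moreover have "c1 * cos b - Tq \<ge> - e1" using hT by (simp add: abs_le_iff)
      ultimately have "c1 * \<eta> - e1 \<le> c1 * cos (z - \<mu>) - Tq" by linarith
      then show False using G ht unfolding \<eta>_def by linarith
    qed
  next
    case False
    then have I0: "boxind w \<xi> z = 0" by (simp add: boxind_def split: if_splits)
    then have G: "c1 * cos (z - \<mu>) - Tq > 0" using bad by auto
    have nk: "\<And>k::int. \<bar>z - \<xi> - 2 * pi * of_int k\<bar> > w / 2"
      using I0 unfolding boxind_def by (auto split: if_splits simp: not_le)
    define k :: int where "k = \<lfloor>(z - \<mu> + pi) / (2 * pi)\<rfloor>"
    define \<phi> where "\<phi> = z - \<mu> - 2 * pi * of_int k"
    have fl: "of_int k \<le> (z - \<mu> + pi) / (2 * pi)" "(z - \<mu> + pi) / (2 * pi) < of_int k + 1"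
      unfolding k_def by linarith+
    have ph1: "- pi \<le> \<phi>" "\<phi> \<le> pi"
    proof -
      have "2 * pi * of_int k \<le> z - \<mu> + pi" using fl(1) by (simp add: le_divide_eq mult.commute)
      then show "- pi \<le> \<phi>" unfolding \<phi>_def by linarith
      have "z - \<mu> + pi < 2 * pi * (of_int k + 1)" using fl(2) by (simp add: divide_less_eq mult.commute)
      then show "\<phi> \<le> pi" unfolding \<phi>_def by (simp add: algebra_simps)
    qed
    have c: "cos \<phi> = cos (z - \<mu>)" unfolding \<phi>_def cos_shift_int ..
    have ph: "\<bar>\<phi>\<bar> < b + t"
    proof (rule ccontr)
      assume "\<not> ?thesis"
      then have "cos \<bar>\<phi>\<bar> \<le> cos (b + t)" using ph1 b0 al t by (intro cos_monotone_0_pi_le) auto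
      then have "cos (z - \<mu>) \<le> cos b - \<eta>" using g2 c by (simp add: cos_abs_real)
      then have "c1 * cos (z - \<mu>) \<le> c1 * (cos b - \<eta>)" using c1 by (intro mult_left_mono) auto
      moreover have "Tq \<ge> c1 * cos b - e1" using hT by (simp add: abs_le_iff)
      ultimately have "c1 * cos (z - \<mu>) - Tq \<le> e1 - c1 * \<eta>" by (simp add: algebra_simps)
      moreover have "e1 - c1 * \<eta> < 0" using ht M1 unfolding \<eta>_def by linarith
      ultimately show False using G by linarith
    qed
    have "\<bar>z - \<xi> - 2 * pi * of_int k\<bar> \<le> \<bar>\<phi>\<bar> + \<bar>\<mu> - \<xi>\<bar>" unfolding \<phi>_def by linarith
    then have "\<bar>z - \<xi> - 2 * pi * of_int k\<bar> \<le> w / 2 + \<delta> + t" using ph hb hmu by linarith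
    then show ?thesis using nk[of k] by (intro exI[of _ k]) linarith
  qed
qed

lemma sample_bound:
  fixes N S :: nat and hl hu wl wu a T h w \<xi> \<delta> \<alpha>0 s0 eT t K :: real and F :: fno
  assumes \<delta>_def: "\<delta> = 2 * pi / real N"
      and \<alpha>0_def: "\<alpha>0 = min (wl / 4) ((2 * pi - wu) / 4)"
      and s0_def: "s0 = sin (\<alpha>0 / 2)"
      and eT_def: "eT = (2 * pi) ^ S / fact S"
      and t_def: "t = 2 * pi * (1 / real N + eT / pi) / s0 ^ 2"
      and K_def: "K = (\<Sum>k<S. \<bar>hc k\<bar>) + 1"
      and F_def: "F = mkF N S hl K (2 * K + hu) (real N) (hu + 1) (1 / (2 * real N * sin (\<delta> / 2))) (a * T)"
    and hl: "0 < hl" "hl \<le> h" "h \<le> hu" and w: "0 < wl" "wl \<le> w" "w \<le> wu" "wu < 2 * pi"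
    and N: "N \<ge> 2" "\<delta> \<le> \<alpha>0" and tb: "t \<le> \<alpha>0"
  shows "L1_dist (G_adv a T (ubar h w \<xi>)) (fno_eval F (ubar h w \<xi>))
           \<le> ennreal (2 * pi * hu * (1 - \<alpha>0 / (2 * pi)) ^ S + hu * (12 * (\<delta> + t)))"
proof -
  define s where "s = a * T"
  define ind where "ind = boxind w \<xi>"
  define Bc where "Bc = 2 * K + hu"
  define \<beta> where "\<beta> = 1 / (2 * real N * sin (\<delta> / 2))"
  have a0: "0 < \<alpha>0" "\<alpha>0 \<le> wl / 4" "\<alpha>0 \<le> (2 * pi - wu) / 4"
    using w unfolding \<alpha>0_def by (auto simp: min_def)
  have dpos: "\<delta> > 0" using N unfolding \<delta>_def by simp
  have Npos: "real N > 0" using N by simp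
  have w1: "\<delta> \<le> w" using N a0 w by linarith
  have w2: "w + \<delta> \<le> 2 * pi"
  proof -
    have "\<delta> \<le> (2 * pi - wu) / 4" using N(2) a0(3) by linarith
    then show ?thesis using w(3,4) by (simp add: field_simps)
  qed
  obtain n \<mu> where n: "1 \<le> n" "n \<le> N" and mean: "meanN N (boxind w \<xi>) = real n / real N"
    and dft1: "dft N (boxind w \<xi>) 1 = cis (- \<mu>) * complex_of_real (sin (real n * \<delta> / 2) / (real N * sin (\<delta> / 2)))"
    and hmu: "\<bar>\<mu> - \<xi>\<bar> \<le> \<delta> / 2" and hn: "w - \<delta> \<le> real n * \<delta>" "real n * \<delta> \<le> w + \<delta>"
    using box_facts[OF N(1) \<delta>_def w1 w2, of \<xi>] by blast
  define p where "p = real n / real N"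
  define b where "b = pi * p"
  have bn: "b = real n * \<delta> / 2" unfolding b_def p_def \<delta>_def by simp
  have hb: "\<bar>b - w / 2\<bar> \<le> \<delta> / 2" unfolding bn abs_le_iff using hn by linarith
  have p01: "0 \<le> p" "p \<le> 1" unfolding p_def using n Npos by auto
  have bt1: "\<alpha>0 / 2 \<le> b - t" using hb a0 w N tb by linarith
  have bt2: "b + t \<le> pi - \<alpha>0 / 2"
  proof -
    have "b \<le> w / 2 + \<delta> / 2" using hb unfolding abs_le_iff by linarith
    moreover have "\<alpha>0 * 4 \<le> 2 * pi - wu" using a0(3) by simp
    ultimately show ?thesis using w N tb by linarith
  qed
  have t0: "0 \<le> t"
  proof -
    have "0 \<le> eT" unfolding eT_def by simp
    then show ?thesis unfolding t_def by simp
  qed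
  have t2: "t \<le> 2" using tb a0 w pi_less_4 by linarith
  have al: "0 < \<alpha>0 / 2" "\<alpha>0 / 2 \<le> pi / 2" using a0 w by auto
  have s0pos: "s0 > 0" unfolding s0_def using al by (intro sin_gt_zero) auto
  have ind01: "\<And>x. ind x = 0 \<or> ind x = 1" by (simp add: ind_def boxind_def)
  have u: "ubar h w \<xi> = (\<lambda>x. h * ind x)" by (simp add: ubar_box ind_def)
  define m where "m = h * p"
  have m0: "m \<ge> 0" using hl p01 unfolding m_def by simp
  have pm: "p = meanN N ind" using mean by (simp add: p_def ind_def)
  have K1: "K \<ge> 1" unfolding K_def by (simp add: sum_nonneg)
  have bnd: "\<And>l. l \<le> S \<Longrightarrow> 0 \<le> Hs p m l \<and> Hs p m l \<le> Bc \<and> 0 \<le> Qs S K p l \<and> Qs S K p l \<le> Bc"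
  proof -
    fix l assume l: "l \<le> S"
    have "0 \<le> Hs p m l \<and> Hs p m l \<le> h" unfolding m_def using Hs_bnd[OF p01] hl by simp
    moreover have "\<bar>Qs S K p l - K\<bar> \<le> K - 1" using Qs_bnd2[OF p01 l, of K] unfolding K_def by simp
    ultimately show "0 \<le> Hs p m l \<and> Hs p m l \<le> Bc \<and> 0 \<le> Qs S K p l \<and> Qs S K p l \<le> Bc"
      using hl K1 unfolding Bc_def by (auto simp: abs_le_iff)
  qed
  have ev: "\<And>x. fno_eval F (\<lambda>x. h * ind x) x =
    relu (Hs p m S + (hu + 1) * relu (real N * (Re (exp (- \<i> * complex_of_real s) * dft N ind 1 * exp (\<i> * complex_of_real x))
                                    - \<beta> * (Qs S K p S - K)))
                   - (hu + 1) * relu (real N * (Re (exp (- \<i> * complex_of_real s) * dft N ind 1 * exp (\<i> * complex_of_real x))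
                                    - \<beta> * (Qs S K p S - K)) - 1) - (hu + 1))"
    unfolding F_def s_def[symmetric] \<beta>_def[symmetric] Bc_def[symmetric]
    by (rule eval_main[OF _ hl(1,2) ind01 pm m_def bnd m0]) (use N in auto)
  define c1 where "c1 = sin b / (real N * sin (\<delta> / 2))"
  have sd: "0 < sin (\<delta> / 2)"
  proof -
    have "\<delta> / 2 < pi" using N a0 w pi_gt3 by linarith
    then show ?thesis using dpos by (intro sin_gt_zero) auto
  qed
  have d1: "\<delta> / 2 \<le> 1" using N a0 w pi_less_4 by linarith
  have Nsd1: "real N * sin (\<delta> / 2) \<le> pi"
  proof -
    have "sin (\<delta> / 2) \<le> \<delta> / 2" using dpos by (intro sin_x_le_x) simp
    then have "real N * sin (\<delta> / 2) \<le> real N * (\<delta> / 2)" using Npos by simp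
    also have "real N * (\<delta> / 2) = pi" unfolding \<delta>_def using Npos by simp
    finally show ?thesis .
  qed
  have Nsd2: "pi / 2 \<le> real N * sin (\<delta> / 2)"
  proof -
    have "\<delta> / 2 / 2 \<le> sin (\<delta> / 2)" using dpos d1 by (intro sin_ge_half) auto
    then have le: "real N * (\<delta> / 2 / 2) \<le> real N * sin (\<delta> / 2)" using Npos by simp
    have e: "real N * (\<delta> / 2 / 2) = pi / 2" unfolding \<delta>_def using Npos by simp
    show ?thesis using le unfolding e .
  qed
  have Nsd0: "0 < real N * sin (\<delta> / 2)" using Npos sd by simp
  have sb: "s0 \<le> sin b" unfolding s0_def using bt1 bt2 t0 al by (intro sin_ge_mid) auto
  have c1lo: "s0 / pi \<le> c1"
  proof -
    have "s0 / pi \<le> sin b / pi" using sb by (simp add: divide_right_mono)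
    also have "\<dots> \<le> sin b / (real N * sin (\<delta> / 2))"
      using Nsd1 Nsd0 sb s0pos by (intro divide_left_mono) auto
    finally show ?thesis unfolding c1_def .
  qed
  have c1pos: "c1 > 0" using c1lo s0pos by (smt (verit) divide_pos_pos pi_gt_zero)
  have beta0: "0 \<le> \<beta>" unfolding \<beta>_def using Nsd0 by simp
  have beta1: "\<beta> \<le> 1 / pi"
  proof -
    have "\<beta> = 1 / (2 * (real N * sin (\<delta> / 2)))" unfolding \<beta>_def by (simp add: mult.assoc)
    also have "\<dots> \<le> 1 / (2 * (pi / 2))" using Nsd2 Nsd0 by (intro divide_left_mono) auto
    finally show ?thesis by simp
  qed
  have Tid: "c1 * cos b = \<beta> * sin (2 * pi * p)"
  proof -
    have "sin (2 * pi * p) = 2 * sin b * cos b" unfolding b_def using sin_double[of "pi * p"] by (simp add: mult.assoc)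
    then show ?thesis unfolding c1_def \<beta>_def using Nsd0 by (simp add: field_simps)
  qed
  have hT: "\<bar>\<beta> * (Qs S K p S - K) - c1 * cos b\<bar> \<le> eT / pi"
  proof -
    have "\<bar>\<beta> * (Qs S K p S - K) - c1 * cos b\<bar> = \<beta> * \<bar>(Qs S K p S - K) - sin (2 * pi * p)\<bar>"
      unfolding Tid using beta0 by (simp add: abs_mult right_diff_distrib[symmetric])
    also have "\<dots> \<le> \<beta> * eT" unfolding eT_def using beta0 Qs_taylor[OF p01] by (intro mult_left_mono) auto
    also have "\<dots> \<le> (1 / pi) * eT" using beta1 unfolding eT_def by (intro mult_right_mono) auto
    finally show ?thesis by simp
  qed
  have ht: "c1 * (sin (\<alpha>0 / 2) * t / 2) \<ge> 1 / real N + eT / pi"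
  proof -
    have le: "s0 / pi * (s0 * t / 2) \<le> c1 * (s0 * t / 2)" using c1lo s0pos t0 by (intro mult_right_mono) auto
    have e: "s0 / pi * (s0 * t / 2) = 1 / real N + eT / pi"
      unfolding t_def using s0pos by (simp add: field_simps power2_eq_square)
    have "1 / real N + eT / pi \<le> c1 * (s0 * t / 2)" using le unfolding e .
    then show ?thesis unfolding s0_def by (simp add: mult.assoc)
  qed
  have reform: "\<And>x. Re (exp (- \<i> * complex_of_real s) * dft N ind 1 * exp (\<i> * complex_of_real x)) = c1 * cos (x - s - \<mu>)"
  proof -
    fix x
    have "exp (- \<i> * complex_of_real s) * dft N ind 1 * exp (\<i> * complex_of_real x)
        = complex_of_real c1 * (cis (- s) * cis (- \<mu>) * cis x)"
      unfolding ind_def dft1 c1_def bn by (simp add: cis_conv_exp algebra_simps)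
    also have "cis (- s) * cis (- \<mu>) * cis x = cis (x - s - \<mu>)" by (simp add: cis_mult algebra_simps)
    finally show "Re (exp (- \<i> * complex_of_real s) * dft N ind 1 * exp (\<i> * complex_of_real x)) = c1 * cos (x - s - \<mu>)"
      by simp
  qed
  have Gadv: "\<And>y. G_adv a T (ubar h w \<xi>) y = h * ind (y - s)" by (simp add: G_adv_def u s_def)
  define U where "U = Uset (s + \<xi>) w (\<delta> + t)"
  have Hb: "0 \<le> Hs p m S" "Hs p m S \<le> h" unfolding m_def using Hs_bnd[OF p01] hl by auto
  have pt: "\<And>y. 0 \<le> y \<Longrightarrow> y \<le> 2 * pi \<Longrightarrow>
     \<bar>G_adv a T (ubar h w \<xi>) y - fno_eval F (ubar h w \<xi>) y\<bar> \<le> (h - Hs p m S) + (if y \<in> U then hu else 0)"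
  proof -
    fix y :: real assume y: "0 \<le> y" "y \<le> 2 * pi"
    define G where "G = c1 * cos (y - s - \<mu>) - \<beta> * (Qs S K p S - K)"
    have o: "fno_eval F (ubar h w \<xi>) y = relu (Hs p m S + (hu + 1) * relu (real N * G) - (hu + 1) * relu (real N * G - 1) - (hu + 1))"
      unfolding u ev reform G_def ..
    have e1: "\<bar>h * ind (y - s) - fno_eval F (ubar h w \<xi>) y\<bar>
       \<le> (h - Hs p m S) + (if (ind (y - s) = 1 \<and> G \<ge> 1 / real N) \<or> (ind (y - s) = 0 \<and> G \<le> 0) then 0 else hu)"
      unfolding o by (rule out_err[OF Hb(1) Hb(2) hl(3) _ Npos ind01]) (use hl in simp)
    show "\<bar>G_adv a T (ubar h w \<xi>) y - fno_eval F (ubar h w \<xi>) y\<bar> \<le> (h - Hs p m S) + (if y \<in> U then hu else 0)"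
    proof (cases "(ind (y - s) = 1 \<and> G \<ge> 1 / real N) \<or> (ind (y - s) = 0 \<and> G \<le> 0)")
      case True
      then show ?thesis using e1 hl unfolding Gadv by auto
    next
      case False
      have bad: "\<not> ((boxind w \<xi> (y - s) = 1 \<and> c1 * cos (y - s - \<mu>) - \<beta> * (Qs S K p S - K) \<ge> 1 / real N)
          \<or> (boxind w \<xi> (y - s) = 0 \<and> c1 * cos (y - s - \<mu>) - \<beta> * (Qs S K p S - K) \<le> 0))"
        using False unfolding G_def ind_def .
      obtain k :: int where k: "\<bar>\<bar>y - s - \<xi> - 2 * pi * of_int k\<bar> - w / 2\<bar> \<le> \<delta> + t"
        using bad_cover[OF c1pos al t0 t2 bt1 bt2 hb hmu hT ht _ bad] Npos by auto
      have k': "\<bar>\<bar>y - (s + \<xi>) - 2 * pi * of_int k\<bar> - w / 2\<bar> \<le> \<delta> + t"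
        using k by (simp add: diff_diff_eq add.assoc)
      have wr: "w / 2 + (\<delta> + t) \<le> pi"
      proof -
        have "\<alpha>0 * 4 \<le> 2 * pi - wu" using a0(3) by simp
        then show ?thesis using w N tb by linarith
      qed
      have "y \<in> U" unfolding U_def
        by (rule Uset_cover[OF _ _ wr y k']) (use dpos t0 w in auto)
      then show ?thesis using e1 hl unfolding Gadv by (auto split: if_splits)
    qed
  qed
  have e0: "0 \<le> h - Hs p m S" using Hb by simp
  have L: "L1_dist (G_adv a T (ubar h w \<xi>)) (fno_eval F (ubar h w \<xi>)) \<le> ennreal (2 * pi * (h - Hs p m S) + hu * (12 * (\<delta> + t)))"
  proof -
    have Um: "emeasure lborel U \<le> ennreal (12 * (\<delta> + t))" unfolding U_def using dpos t0 by (intro Uset_measure) auto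
    have Us: "U \<in> sets lborel" unfolding U_def by (rule Uset_sets)
    show ?thesis by (rule L1_bound[OF pt e0 _ Us Um]) (use hl dpos t0 in auto)
  qed
  have hH: "h - Hs p m S \<le> hu * (1 - \<alpha>0 / (2 * pi)) ^ S"
  proof -
    have "h - Hs p m S = h * (1 - p) ^ S" unfolding m_def Hs_closed by (simp add: algebra_simps)
    moreover have "(1 - p) ^ S \<le> (1 - \<alpha>0 / (2 * pi)) ^ S"
    proof (rule power_mono)
      have "\<alpha>0 / 2 \<le> b" using bt1 t0 by linarith
      then have "\<alpha>0 / (2 * pi) \<le> p" unfolding b_def by (simp add: field_simps)
      then show "1 - p \<le> 1 - \<alpha>0 / (2 * pi)" by simp
      show "0 \<le> 1 - p" using p01 by simp
    qed
    ultimately show ?thesis using hl p01 by (simp add: mult_mono)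
  qed
  show ?thesis
  proof (rule order_trans[OF L ennreal_leI])
    show "2 * pi * (h - Hs p m S) + hu * (12 * (\<delta> + t)) \<le> 2 * pi * hu * (1 - \<alpha>0 / (2 * pi)) ^ S + hu * (12 * (\<delta> + t))"
      using hH by (simp add: mult.assoc)
  qed
qed



lemma err_arith:
  fixes hu s0 N X R eT E4 A B \<epsilon> :: real
  assumes hu: "hu > 0" and s0: "s0 > 0" and N: "N > 0" and X: "0 \<le> X" "X \<le> R"
    and eT: "0 \<le> eT" "eT \<le> E4 * R"
    and A: "A = 2 * pi * hu + 24 * hu * E4 / s0 ^ 2" and B: "B = 24 * pi * hu * (1 + 1 / s0 ^ 2)"
    and AR: "A * R \<le> \<epsilon> / 2" and BN: "B / N \<le> \<epsilon> / 2"
  shows "2 * pi * hu * X + hu * (12 * (2 * pi / N + 2 * pi * (1 / N + eT / pi) / s0 ^ 2)) \<le> \<epsilon>"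
proof -
  have e: "hu * (12 * (2 * pi / N + 2 * pi * (1 / N + eT / pi) / s0 ^ 2)) = B / N + 24 * hu * eT / s0 ^ 2"
    unfolding B using N s0 by (simp add: field_simps)
  have 1: "2 * pi * hu * X \<le> 2 * pi * hu * R" using X hu by simp
  have 2: "24 * hu * eT / s0 ^ 2 \<le> 24 * hu * (E4 * R) / s0 ^ 2" using eT hu s0 by (simp add: divide_right_mono)
  have "2 * pi * hu * R + 24 * hu * (E4 * R) / s0 ^ 2 = A * R" unfolding A by (simp add: field_simps)
  then show ?thesis unfolding e using 1 2 AR BN by linarith
qed

lemma quad_bound:
  fixes L c c' l0 :: real
  assumes "0 < l0" "l0 \<le> L" "0 \<le> c" "0 \<le> c'"
  shows "c * L + c' \<le> (c / l0 + c' / l0 ^ 2) * L ^ 2"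
proof -
  have L0: "0 < L" using assms by simp
  have a: "L \<le> L ^ 2 / l0" using assms L0 by (simp add: field_simps power2_eq_square)
  have b: "1 \<le> L ^ 2 / l0 ^ 2" using assms by (simp add: field_simps power_mono)
  have "c * L \<le> c * (L ^ 2 / l0)" using a assms by (intro mult_left_mono) auto
  moreover have "c' \<le> c' * (L ^ 2 / l0 ^ 2)" using mult_left_mono[OF b, of c'] assms by simp
  ultimately have "c * L + c' \<le> c * (L ^ 2 / l0) + c' * (L ^ 2 / l0 ^ 2)" by linarith
  also have "\<dots> = (c / l0 + c' / l0 ^ 2) * L ^ 2" by (simp add: field_simps)
  finally show ?thesis .
qed

lemma pow_le_exp:
  fixes \<rho> q :: real and S :: nat
  assumes "0 < \<rho>" "\<rho> < 1" "q \<le> real S"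
  shows "\<rho> ^ S \<le> exp (q * ln \<rho>)"
proof -
  have "exp (real S * ln \<rho>) = exp (ln \<rho>) ^ S" by (rule exp_of_nat_mult)
  then have "\<rho> ^ S = exp (real S * ln \<rho>)" using assms by simp
  also have "\<dots> \<le> exp (q * ln \<rho>)"
  proof -
    have "ln \<rho> < 0" using assms by simp
    then have "real S * ln \<rho> \<le> q * ln \<rho>" using assms by (intro mult_right_mono_neg) auto
    then show ?thesis by simp
  qed
  finally show ?thesis .
qed

theorem theorem3p3:
  fixes a T hl hu wl wu :: real
  assumes "T > 0"
    and "0 < hl" and "hl \<le> hu"
    and "0 < wl" and "wl \<le> wu" and "wu < 2 * pi"
  shows "\<exists>C > 0. \<forall>\<epsilon>::real. 0 < \<epsilon> \<and> \<epsilon> \<le> 1/2 \<longrightarrow>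
           (\<exists>F :: fno.
              fno_N F \<ge> 1 \<and> real (fno_N F) \<le> C / \<epsilon> \<and>
              fno_kmax F = 1 \<and>
              real (fno_dv F) \<le> C \<and>
              real (fno_depth F) \<le> C * (ln (1 / \<epsilon>))\<^sup>2 \<and>
              real (fno_size F) \<le> C * (ln (1 / \<epsilon>))\<^sup>2 \<and>
              expect_mu hl hu wl wu (\<lambda>u. L1_dist (G_adv a T u) (fno_eval F u))
                \<le> ennreal \<epsilon>)"
proof -
  define \<alpha>0 where "\<alpha>0 = min (wl / 4) ((2 * pi - wu) / 4)"
  define s0 where "s0 = sin (\<alpha>0 / 2)"
  define \<rho> where "\<rho> = max (1 - \<alpha>0 / (2 * pi)) (1 / 2)"
  define E4 where "E4 = exp (4 * pi)"
  define A where "A = 2 * pi * hu + 24 * hu * E4 / s0 ^ 2"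
  define B where "B = 24 * pi * hu * (1 + 1 / s0 ^ 2)"
  define \<kappa> where "\<kappa> = min 1 (min (1 / (2 * A)) (\<alpha>0 * s0 ^ 2 / (2 * E4)))"
  define Cn where "Cn = 2 * B + 2 + 2 * pi / \<alpha>0 + 4 * pi / (\<alpha>0 * s0 ^ 2)"
  define lam where "lam = - ln \<rho>"
  define lk where "lk = - ln \<kappa>"
  define l0 where "l0 = ln (2::real)"
  define D where "D = (1 / lam) / l0 + (lk / lam + 3) / l0 ^ 2"
  define C where "C = max (Cn + 1) (max 6 (max D (30 / l0 ^ 2 + 288 * D)))"
  have a0: "0 < \<alpha>0" "\<alpha>0 \<le> wl / 4" "\<alpha>0 \<le> (2 * pi - wu) / 4"
    using assms unfolding \<alpha>0_def by (auto simp: min_def)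
  have a0pi: "\<alpha>0 < pi" using a0 assms by linarith
  have s0pos: "0 < s0" unfolding s0_def using a0 a0pi by (intro sin_gt_zero) auto
  have hu0: "0 < hu" using assms by linarith
  have E4pos: "0 < E4" unfolding E4_def by simp
  have rho: "1 / 2 \<le> \<rho>" "\<rho> < 1" "0 < \<rho>" "1 - \<alpha>0 / (2 * pi) \<le> \<rho>" "0 \<le> 1 - \<alpha>0 / (2 * pi)"
  proof -
    show "1 / 2 \<le> \<rho>" "1 - \<alpha>0 / (2 * pi) \<le> \<rho>" unfolding \<rho>_def by auto
    have "0 < \<alpha>0 / (2 * pi)" using a0 by simp
    then show "\<rho> < 1" unfolding \<rho>_def by auto
    show "0 < \<rho>" unfolding \<rho>_def by auto
    have "\<alpha>0 / (2 * pi) \<le> 1" using a0pi a0 by (simp add: field_simps)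
    then show "0 \<le> 1 - \<alpha>0 / (2 * pi)" by simp
  qed
  have lam0: "0 < lam" unfolding lam_def using rho by simp
  have Apos: "0 < A" unfolding A_def using hu0 E4pos s0pos by (simp add: add_pos_nonneg)
  have Bpos: "0 < B"
  proof -
    have "0 < 1 + 1 / s0 ^ 2" using s0pos by (simp add: add_pos_nonneg)
    then show ?thesis unfolding B_def using hu0 by simp
  qed
  have kap: "0 < \<kappa>" "\<kappa> \<le> 1" "\<kappa> \<le> 1 / (2 * A)" "\<kappa> \<le> \<alpha>0 * s0 ^ 2 / (2 * E4)"
    unfolding \<kappa>_def using Apos a0 s0pos E4pos by auto
  have lk0: "0 \<le> lk" unfolding lk_def using kap by simp
  have l0: "0 < l0" unfolding l0_def by simp
  have Cn: "0 < Cn" "2 \<le> Cn" "2 * B \<le> Cn" "2 * pi / \<alpha>0 \<le> Cn" "4 * pi / (\<alpha>0 * s0 ^ 2) \<le> Cn"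
  proof -
    have p1: "0 < 2 * pi / \<alpha>0" using a0 by simp
    have p2: "0 < 4 * pi / (\<alpha>0 * s0 ^ 2)" using a0 s0pos by simp
    show "0 < Cn" "2 \<le> Cn" "2 * B \<le> Cn" "2 * pi / \<alpha>0 \<le> Cn" "4 * pi / (\<alpha>0 * s0 ^ 2) \<le> Cn"
      unfolding Cn_def using Bpos p1 p2 by linarith+
  qed
  have D0: "0 \<le> D" unfolding D_def using lam0 lk0 l0 by simp
  have C: "0 < C" "Cn + 1 \<le> C" "6 \<le> C" "D \<le> C" "30 / l0 ^ 2 + 288 * D \<le> C"
    unfolding C_def using Cn by auto
  show ?thesis
  proof (intro exI[of _ C] conjI allI impI)
    show "0 < C" by (rule C(1))
    fix \<epsilon> :: real assume e: "0 < \<epsilon> \<and> \<epsilon> \<le> 1 / 2"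
    then have e0: "0 < \<epsilon>" and e1: "\<epsilon> \<le> 1 / 2" by auto
    define L where "L = ln (1 / \<epsilon>)"
    have L: "l0 \<le> L" unfolding L_def l0_def using e0 e1 by (simp add: field_simps)
    define N where "N = nat \<lceil>Cn / \<epsilon>\<rceil>"
    have ie: "1 \<le> 1 / \<epsilon>" using e0 e1 by (simp add: field_simps)
    have CnE: "Cn \<le> Cn / \<epsilon>" using mult_left_mono[OF ie, of Cn] Cn(1) by simp
    have N1: "Cn / \<epsilon> \<le> real N" unfolding N_def by linarith
    have N2: "real N \<le> Cn / \<epsilon> + 1"
    proof -
      have ce: "0 \<le> Cn / \<epsilon>" using Cn(1) e0 by simp
      have "real N = of_int \<lceil>Cn / \<epsilon>\<rceil>" unfolding N_def using ce by simp
      then show ?thesis using ceiling_correct[of "Cn / \<epsilon>"] by linarith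
    qed
    have Nge2: "N \<ge> 2" using N1 CnE Cn(2) by linarith
    have Npos: "0 < real N" using Nge2 by simp
    define q where "q = ln (\<kappa> * \<epsilon>) / ln \<rho>"
    have ke: "0 < \<kappa> * \<epsilon>" "\<kappa> * \<epsilon> < 1"
    proof -
      show "0 < \<kappa> * \<epsilon>" using kap e0 by simp
      have "\<kappa> * \<epsilon> \<le> 1 * (1 / 2)" using kap e0 e1 by (intro mult_mono) auto
      then show "\<kappa> * \<epsilon> < 1" by simp
    qed
    have qeq: "q = (lk + L) / lam"
    proof -
      have lnr: "ln \<rho> \<noteq> 0" using rho by simp
      have "ln (\<kappa> * \<epsilon>) = - lk - L" unfolding lk_def L_def using kap e0 by (simp add: ln_mult ln_div)
      then show ?thesis unfolding q_def lam_def using lnr by (simp add: field_simps)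
    qed
    have q0: "0 \<le> q" unfolding qeq using lk0 L l0 lam0 by simp
    define S where "S = nat \<lceil>q\<rceil>"
    have S1: "q \<le> real S" unfolding S_def by linarith
    have S2: "real S \<le> q + 1"
    proof -
      have "real S = of_int \<lceil>q\<rceil>" unfolding S_def using q0 by simp
      then show ?thesis using ceiling_correct[of q] by linarith
    qed
    define R where "R = \<rho> ^ S"
    have R0: "0 \<le> R" unfolding R_def using rho by simp
    have Rk: "R \<le> \<kappa> * \<epsilon>"
    proof -
      have "R \<le> exp (q * ln \<rho>)" unfolding R_def by (rule pow_le_exp[OF rho(3) rho(2) S1])
      also have "q * ln \<rho> = ln (\<kappa> * \<epsilon>)" unfolding q_def using rho by simp
      also have "exp (ln (\<kappa> * \<epsilon>)) = \<kappa> * \<epsilon>" using ke by simp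
      finally show ?thesis .
    qed
    define \<delta> where "\<delta> = 2 * pi / real N"
    define eT where "eT = (2 * pi) ^ S / fact S"
    define t where "t = 2 * pi * (1 / real N + eT / pi) / s0 ^ 2"
    define K where "K = (\<Sum>k<S. \<bar>hc k\<bar>) + 1"
    define F where "F = mkF N S hl K (2 * K + hu) (real N) (hu + 1) (1 / (2 * real N * sin (\<delta> / 2))) (a * T)"
    have eT0: "0 \<le> eT" unfolding eT_def by simp
    have eTR: "eT \<le> E4 * R"
    proof -
      have "eT \<le> exp (4 * pi) / 2 ^ S" unfolding eT_def by (rule taylor_geo)
      also have "\<dots> = E4 * (1 / 2) ^ S" unfolding E4_def by (simp add: power_one_over)
      also have "\<dots> \<le> E4 * R" unfolding R_def using rho E4pos by (intro mult_left_mono power_mono) auto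
      finally show ?thesis .
    qed
    have dle: "\<delta> \<le> \<alpha>0"
    proof -
      have "2 * pi / \<alpha>0 \<le> real N" using Cn(4) CnE N1 by linarith
      then show ?thesis unfolding \<delta>_def using a0 Npos by (simp add: field_simps)
    qed
    have tle: "t \<le> \<alpha>0"
    proof -
      have t_eq: "t = (2 * pi / real N) / s0 ^ 2 + 2 * eT / s0 ^ 2" unfolding t_def using s0pos Npos by (simp add: field_simps)
      have "4 * pi / (\<alpha>0 * s0 ^ 2) \<le> real N" using Cn(5) CnE N1 by linarith
      then have p1: "(2 * pi / real N) / s0 ^ 2 \<le> \<alpha>0 / 2" using a0 Npos s0pos by (simp add: field_simps)
      have "eT \<le> E4 * (\<kappa> * \<epsilon>)" using eTR Rk E4pos by (smt (verit) mult_left_mono)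
      also have "\<dots> \<le> E4 * (\<alpha>0 * s0 ^ 2 / (2 * E4) * (1 / 2))"
        using kap e0 e1 E4pos by (intro mult_left_mono mult_mono) auto
      also have "\<dots> = \<alpha>0 * s0 ^ 2 / 4" using E4pos by (simp add: field_simps)
      finally have "eT \<le> \<alpha>0 * s0 ^ 2 / 4" .
      then have p2: "2 * eT / s0 ^ 2 \<le> \<alpha>0 / 2" using s0pos by (simp add: field_simps)
      show ?thesis unfolding t_eq using p1 p2 by linarith
    qed
    have AR: "A * R \<le> \<epsilon> / 2"
    proof -
      have "A * R \<le> A * (\<kappa> * \<epsilon>)" using Rk Apos by simp
      also have "\<dots> \<le> A * (1 / (2 * A) * \<epsilon>)" using kap Apos e0 by (intro mult_left_mono mult_right_mono) auto
      also have "\<dots> = \<epsilon> / 2" using Apos by simp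
      finally show ?thesis .
    qed
    have BN: "B / real N \<le> \<epsilon> / 2"
    proof -
      have "2 * B / \<epsilon> \<le> real N" using Cn(3) N1 e0 by (smt (verit) divide_right_mono)
      then show ?thesis using e0 Npos Bpos by (simp add: field_simps)
    qed
    have samp: "\<And>h w \<xi>. hl \<le> h \<Longrightarrow> h \<le> hu \<Longrightarrow> wl \<le> w \<Longrightarrow> w \<le> wu \<Longrightarrow>
        L1_dist (G_adv a T (ubar h w \<xi>)) (fno_eval F (ubar h w \<xi>)) \<le> ennreal \<epsilon>"
    proof -
      fix h w \<xi> assume hw: "hl \<le> h" "h \<le> hu" "wl \<le> w" "w \<le> wu"
      have "L1_dist (G_adv a T (ubar h w \<xi>)) (fno_eval F (ubar h w \<xi>))
           \<le> ennreal (2 * pi * hu * (1 - \<alpha>0 / (2 * pi)) ^ S + hu * (12 * (\<delta> + t)))"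
        by (rule sample_bound[OF \<delta>_def \<alpha>0_def s0_def eT_def t_def K_def F_def])
           (use assms hw Nge2 dle tle in auto)
      also have "\<dots> \<le> ennreal \<epsilon>"
      proof (rule ennreal_leI)
        have X: "0 \<le> (1 - \<alpha>0 / (2 * pi)) ^ S" "(1 - \<alpha>0 / (2 * pi)) ^ S \<le> R"
          unfolding R_def using rho by (auto intro: power_mono)
        show "2 * pi * hu * (1 - \<alpha>0 / (2 * pi)) ^ S + hu * (12 * (\<delta> + t)) \<le> \<epsilon>"
          unfolding \<delta>_def t_def
          by (rule err_arith[OF hu0 s0pos Npos X eT0 eTR A_def B_def AR BN])
      qed
      finally show "L1_dist (G_adv a T (ubar h w \<xi>)) (fno_eval F (ubar h w \<xi>)) \<le> ennreal \<epsilon>" .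
    qed
    have EXP: "expect_mu hl hu wl wu (\<lambda>u. L1_dist (G_adv a T u) (fno_eval F u)) \<le> ennreal \<epsilon>"
      by (rule expect_le) (use assms samp in auto)
    have depth: "real (S + 2) \<le> D * L ^ 2"
    proof -
      have "(lk + L) / lam = (1 / lam) * L + lk / lam" by (simp add: add_divide_distrib)
      then have "real (S + 2) \<le> (1 / lam) * L + (lk / lam + 3)" using S2 unfolding qeq by simp
      also have "\<dots> \<le> D * L ^ 2" unfolding D_def
        by (rule quad_bound[OF l0 L]) (use lam0 lk0 in auto)
      finally show ?thesis .
    qed
    have Lsq: "1 \<le> L ^ 2 / l0 ^ 2"
      using L l0 by (simp add: field_simps power_mono)
    show "\<exists>F :: fno.
              fno_N F \<ge> 1 \<and> real (fno_N F) \<le> C / \<epsilon> \<and>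
              fno_kmax F = 1 \<and>
              real (fno_dv F) \<le> C \<and>
              real (fno_depth F) \<le> C * (ln (1 / \<epsilon>))\<^sup>2 \<and>
              real (fno_size F) \<le> C * (ln (1 / \<epsilon>))\<^sup>2 \<and>
              expect_mu hl hu wl wu (\<lambda>u. L1_dist (G_adv a T u) (fno_eval F u))
                \<le> ennreal \<epsilon>"
    proof (intro exI[of _ F] conjI)
      show "fno_N F \<ge> 1" using Nge2 by (simp add: F_def mkF_def)
      have "(Cn + 1) / \<epsilon> = Cn / \<epsilon> + 1 / \<epsilon>" by (simp add: add_divide_distrib)
      then have "real N \<le> (Cn + 1) / \<epsilon>" using N2 ie by linarith
      also have "\<dots> \<le> C / \<epsilon>" using C e0 by (simp add: divide_right_mono)
      finally show "real (fno_N F) \<le> C / \<epsilon>" by (simp add: F_def mkF_def)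
      show "fno_kmax F = 1" by (simp add: F_def mkF_def)
      show "real (fno_dv F) \<le> C" using C by (simp add: F_def mkF_def)
      have "real (fno_depth F) = real (S + 2)" by (simp add: F_def mkF_def fno_depth_def)
      also have "\<dots> \<le> D * L ^ 2" by (rule depth)
      also have "\<dots> \<le> C * L ^ 2" using C by (simp add: mult_right_mono)
      finally show "real (fno_depth F) \<le> C * (ln (1 / \<epsilon>))\<^sup>2" unfolding L_def .
      have "real (fno_size F) = 30 + 288 * real (S + 2)" by (simp add: F_def mkF_def fno_size_def)
      also have "\<dots> \<le> 30 * (L ^ 2 / l0 ^ 2) + 288 * (D * L ^ 2)"
        by (rule add_mono) (use Lsq depth in auto)
      also have "\<dots> = (30 / l0 ^ 2 + 288 * D) * L ^ 2" by (simp add: field_simps)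
      also have "\<dots> \<le> C * L ^ 2" using C by (simp add: mult_right_mono)
      finally show "real (fno_size F) \<le> C * (ln (1 / \<epsilon>))\<^sup>2" unfolding L_def .
      show "expect_mu hl hu wl wu (\<lambda>u. L1_dist (G_adv a T u) (fno_eval F u)) \<le> ennreal \<epsilon>" by (rule EXP)
    qed
  qed
qed


end
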